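(* Each of the following statements implies the next: (a) There exist $0<\alpha<1/2$ and $0<\beta<2$ such that $\operatorname{PaleyDiscrepancy}[\alpha,\beta]$ holds, i.e., for every sufficiently large prime $p\equiv 1 \bmod 4$, \[ \bigg|\sum_{a,b\in S}\chi(a-b)\bigg|<|S|^{2-\beta}\qquad\text{for all } S\subseteq\mathbb{F}_p \text{ with } |S|>p^\alpha . \] (b) There exist $\gamma>1/2$ and $\tau<1/2$ such that for every $\epsilon>0$, $\operatorname{PaleyRIP}[\gamma,\tau-1/2+\epsilon]$ holds, i.e., for every sufficiently large prime $p\equiv 1\bmod 4$, the $\frac{p+1}{2}\times(p+1)$ Paley matrix $\Phi_p$ satisfies the $(p^\gamma,p^{\tau-1/2+\epsilon})$-restricted isometry property. (c) There exists $\tau<1/2$ such that for every $\epsilon>0$, $\operatorname{PaleyClique}[\tau+\epsilon]$ holds, i.e., for every sufficiently large prime $p\equiv 1\bmod 4$, the largest clique in the Paley graph on $p$ vertices has at most $p^{\tau+\epsilon}$ vertices.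
   Context: Throughout, $p\equiv 1 \bmod 4$ is prime, $\mathbb{F}_p$ is the field with $p$ elements, and $\chi:\mathbb{F}_p\to\{-1,0,1\}$ is the Legendre symbol: $\chi(0)=0$, $\chi(x)=1$ if $x$ is a nonzero square, $\chi(x)=-1$ otherwise. The Paley graph on $p$ vertices has vertex set $\mathbb{F}_p$, with $x\sim y$ iff $\chi(x-y)=1$. Write $e(a)=e^{2\pi i a/p}$. Paley matrix: let $Q=\{x\in\mathbb{F}_p:\chi(x)\ge 0\}$ (the squares including $0$), so $M:=|Q|=(p+1)/2$. Let $H$ be the $M\times p$ matrix with rows indexed by $x\in Q$ (with $x=0$ as the first row) and columns indexed by $j\in\{0,1,\dots,p-1\}$, with entries $H[x,j]=e(-xj)$ (equivalently $H[i,j]=e(-i^2 j)$ for $i=0,1,\dots,(p-1)/2$). Let $\tilde\Phi$ be obtained from $H$ by scaling the first row by $\sqrt{1/p}$ and every other row by $\sqrt{2/p}$. The Paley matrix $\Phi_p$ is the $M\times (p+1)$ matrix obtained by appending to $\tilde\Phi$ the column $(1,0,\dots,0)^\top$ (the first standard basis vector of $\mathbb{C}^M$). An $M\times N$ matrix $\Phi$ satisfies the $(K,\delta)$-restricted isometry property (with $0\le\delta<1$) if $(1-\delta)\|x\|^2\le\|\Phi x\|^2\le(1+\delta)\|x\|^2$ for every $x\in\mathbb{R}^N$ having at most $K$ nonzero entries, where $\|\cdot\|$ is the Euclidean norm. *)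

theory Defs
  imports "HOL-Analysis.Analysis" "HOL-Number_Theory.Number_Theory"
begin

text \<open>Elements of F_p are represented by the integers 0..p-1; chi is the Legendre symbol.\<close>

definition chi :: "nat \<Rightarrow> int \<Rightarrow> int" where
  "chi p x = Legendre x (int p)"

definition ep :: "nat \<Rightarrow> real \<Rightarrow> complex" where
  "ep p a = exp (2 * pi * \<i> * complex_of_real a / of_nat p)"

text \<open>Paley matrix: rows i = 0..(p-1)/2, columns j = 0..p (column p is e_1).
  Entry for j < p: scale_i * e(-i^2 j), scale_0 = sqrt(1/p), scale_i = sqrt(2/p) otherwise.\<close>
definition paley_matrix :: "nat \<Rightarrow> nat \<Rightarrow> nat \<Rightarrow> complex" where
  "paley_matrix p i j =
     (if j = p then (if i = 0 then 1 else 0)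
      else complex_of_real (if i = 0 then sqrt (1 / real p) else sqrt (2 / real p))
           * ep p (- (real i ^ 2 * real j)))"

definition RIP :: "(nat \<Rightarrow> nat \<Rightarrow> complex) \<Rightarrow> nat \<Rightarrow> nat \<Rightarrow> real \<Rightarrow> real \<Rightarrow> bool" where
  "RIP Phi M N K \<delta> \<longleftrightarrow>
     (\<forall>x :: nat \<Rightarrow> real. real (card {j \<in> {0..<N}. x j \<noteq> 0}) \<le> K \<longrightarrow>
        (1 - \<delta>) * (\<Sum>j<N. (x j)\<^sup>2)
          \<le> (\<Sum>i<M. (cmod (\<Sum>j<N. Phi i j * complex_of_real (x j)))\<^sup>2) \<and>
        (\<Sum>i<M. (cmod (\<Sum>j<N. Phi i j * complex_of_real (x j)))\<^sup>2)
          \<le> (1 + \<delta>) * (\<Sum>j<N. (x j)\<^sup>2))"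

definition PaleyDiscrepancy :: "real \<Rightarrow> real \<Rightarrow> bool" where
  "PaleyDiscrepancy \<alpha> \<beta> \<longleftrightarrow>
     (\<exists>P. \<forall>p::nat. prime p \<and> p mod 4 = 1 \<and> p \<ge> P \<longrightarrow>
        (\<forall>S. S \<subseteq> {0..<int p} \<and> real (card S) > real p powr \<alpha> \<longrightarrow>
           \<bar>real_of_int (\<Sum>a\<in>S. \<Sum>b\<in>S. chi p (a - b))\<bar> < real (card S) powr (2 - \<beta>)))"

definition PaleyRIP :: "real \<Rightarrow> real \<Rightarrow> bool" where
  "PaleyRIP \<gamma> d \<longleftrightarrow>
     (\<exists>P. \<forall>p::nat. prime p \<and> p mod 4 = 1 \<and> p \<ge> P \<longrightarrow>
        RIP (paley_matrix p) ((p + 1) div 2) (p + 1) (real p powr \<gamma>) (real p powr d))"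

definition paley_clique :: "nat \<Rightarrow> int set \<Rightarrow> bool" where
  "paley_clique p S \<longleftrightarrow> S \<subseteq> {0..<int p} \<and>
     (\<forall>a\<in>S. \<forall>b\<in>S. a \<noteq> b \<longrightarrow> chi p (a - b) = 1)"

definition PaleyClique :: "real \<Rightarrow> bool" where
  "PaleyClique t \<longleftrightarrow>
     (\<exists>P. \<forall>p::nat. prime p \<and> p mod 4 = 1 \<and> p \<ge> P \<longrightarrow>
        (\<forall>S. paley_clique p S \<longrightarrow> real (card S) \<le> real p powr t))"

end

theory Submission
  imports Defs
begin

definition E :: "nat \<Rightarrow> int \<Rightarrow> complex" where
  "E p n = ep p (of_int n)"

lemma E_add: "E p (a + b) = E p a * E p b"
  unfolding E_def ep_def by (simp add: add_divide_distrib distrib_left exp_add)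

lemma E_0[simp]: "E p 0 = 1"
  unfolding E_def ep_def by simp

lemma E_mult_p: assumes "p > 0" shows "E p (int p * k) = 1"
proof -
  have "2 * pi * \<i> * complex_of_real (real_of_int (int p * k)) / of_nat p
        = \<i> * (of_int k * (of_real pi * 2))"
    using assms by (simp add: field_simps)
  then show ?thesis unfolding E_def ep_def by simp
qed

lemma E_cong: assumes "p > 0" "[a = b] (mod int p)" shows "E p a = E p b"
proof -
  from assms(2) obtain k where "a = b + int p * k"
    by (metis cong_iff_lin cong_sym)
  then show ?thesis using E_add E_mult_p[OF assms(1)] by simp
qed

lemma E_mod: assumes "p > 0" shows "E p (a mod int p) = E p a"
  by (rule E_cong[OF assms]) (simp add: cong_def)

lemma cnj_E: "cnj (E p n) = E p (-n)"
  unfolding E_def ep_def by (simp add: exp_cnj)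

lemma norm_E[simp]: "cmod (E p n) = 1"
  unfolding E_def ep_def by (simp add: norm_exp_eq_Re)

lemma E_mult_cnj: "E p a * cnj (E p b) = E p (a - b)"
  using E_add[of p a "-b"] by (simp add: cnj_E)

lemma E_pow: "E p c ^ y = E p (c * int y)"
proof (induction y)
  case 0 then show ?case by simp
next
  case (Suc y) then show ?case by (simp add: E_add[symmetric] algebra_simps)
qed

lemma E_eq_1: assumes "p > 0" "E p c = 1" shows "int p dvd c"
proof -
  have "exp (2 * pi * \<i> * complex_of_real (real_of_int c) / of_nat p) = 1"
    using assms(2) unfolding E_def ep_def by simp
  then obtain n :: int where n: "Im (2 * pi * \<i> * complex_of_real (real_of_int c) / of_nat p) = of_int (2 * n) * pi"
    unfolding exp_eq_1 by blast
  then have "2 * pi * real_of_int c / real p = 2 * real_of_int n * pi"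
    by simp
  then have "real_of_int c = real p * real_of_int n" using assms(1) by (simp add: field_simps)
  then have "c = int p * n" by (metis of_int_eq_iff of_int_mult of_int_of_nat_eq)
  then show ?thesis by simp
qed

lemma orth: assumes "p > 0"
  shows "(\<Sum>y<p. E p (c * int y)) = (if int p dvd c then of_nat p else 0)"
proof (cases "int p dvd c")
  case True
  then obtain k where "c = int p * k" by blast
  then have "E p (c * int y) = 1" for y
    using E_mult_p[OF assms, of "k * int y"] by (simp add: mult.assoc)
  then show ?thesis using True by simp
next
  case False
  then have ne: "E p c \<noteq> 1" using E_eq_1[OF assms] by blast
  have "E p c ^ p = 1" unfolding E_pow using E_mult_p[OF assms, of c] by (simp add: mult.commute)
  then have "(\<Sum>y<p. E p c ^ y) = 0" using ne by (simp add: sum_gp_strict)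
  then show ?thesis using False by (simp add: E_pow)
qed


lemma QuadRes_cong: "[a = b] (mod m) \<Longrightarrow> QuadRes m a = QuadRes m b"
  unfolding QuadRes_def by (meson cong_sym cong_trans)

lemma Leg_cong: assumes c: "[a = b] (mod m)" shows "Legendre a m = Legendre b m"
proof -
  have "[a = 0] (mod m) \<longleftrightarrow> [b = 0] (mod m)" by (meson c cong_sym cong_trans)
  then show ?thesis unfolding Legendre_def using QuadRes_cong[OF c] by simp
qed

lemma Leg_mod: "Legendre (a mod m) m = Legendre a m"
  by (rule Leg_cong) (simp add: cong_def)

lemma Leg_range: "Legendre a m \<in> {-1, 0, 1}"
  unfolding Legendre_def by auto

lemma Leg_mult:
  assumes "prime p" "2 < p"
  shows "Legendre (a * b) (int p) = Legendre a (int p) * Legendre b (int p)"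
proof -
  let ?k = "(p - 1) div 2"
  have 1: "[Legendre (a*b) (int p) = (a*b) ^ ?k] (mod int p)" using euler_criterion assms by blast
  have 2: "[Legendre a (int p) * Legendre b (int p) = a ^ ?k * b ^ ?k] (mod int p)"
    using euler_criterion[OF assms, of a] euler_criterion[OF assms, of b] cong_mult by blast
  have "[Legendre (a*b) (int p) = Legendre a (int p) * Legendre b (int p)] (mod int p)"
    using 1 2 by (metis cong_sym cong_trans power_mult_distrib)
  then have d: "int p dvd (Legendre (a*b) (int p) - Legendre a (int p) * Legendre b (int p))"
    by (simp add: cong_iff_dvd_diff)
  have r: "Legendre (a*b) (int p) \<in> {-1,0,1}" "Legendre a (int p) \<in> {-1,0,1}" "Legendre b (int p) \<in> {-1,0,1}"
    using Leg_range by auto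
  define D where "D = Legendre (a*b) (int p) - Legendre a (int p) * Legendre b (int p)"
  have "\<bar>D\<bar> \<le> 2" using r unfolding D_def by auto
  moreover have "int p dvd D" using d D_def by simp
  ultimately have "D = 0" using assms(2) dvd_imp_le_int[of D "int p"] by linarith
  then show ?thesis unfolding D_def by simp
qed

lemma Leg_nz: assumes "\<not> int p dvd a" shows "Legendre a (int p) \<in> {-1, 1}"
  using assms unfolding Legendre_def cong_0_iff by auto

lemma Leg_sq: assumes "\<not> int p dvd a" shows "Legendre a (int p) * Legendre a (int p) = 1"
  using Leg_nz[OF assms] by auto

lemma Leg_0: "Legendre 0 m = 0" unfolding Legendre_def by simp

lemma mult_bij:
  assumes "prime p" "\<not> int p dvd d"
  shows "bij_betw (\<lambda>y. (d * y) mod int p) {0..<int p} {0..<int p}"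
proof -
  have pp: "prime (int p)" using assms(1) by simp
  have p0: "int p > 0" using assms(1) prime_gt_0_nat by simp
  have inj: "inj_on (\<lambda>y. (d * y) mod int p) {0..<int p}"
  proof (rule inj_onI)
    fix x y assume x: "x \<in> {0..<int p}" and y: "y \<in> {0..<int p}" and e: "(d * x) mod int p = (d * y) mod int p"
    then have "int p dvd d * x - d * y" by (simp add: mod_eq_dvd_iff)
    then have "int p dvd d * (x - y)" by (simp add: right_diff_distrib)
    then have "int p dvd x - y" using assms(2) pp by (simp add: prime_dvd_mult_iff)
    moreover have "\<bar>x - y\<bar> < int p" using x y by auto
    ultimately show "x = y"
    proof -
      assume a: "int p dvd x - y" "\<bar>x - y\<bar> < int p"
      show "x = y"
      proof (rule ccontr)
        assume "x \<noteq> y"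
        then have "\<bar>int p\<bar> \<le> \<bar>x - y\<bar>" using dvd_imp_le_int[of "x - y" "int p"] a(1) by simp
        then show False using a(2) by linarith
      qed
    qed
  qed
  have sub: "(\<lambda>y. (d * y) mod int p) ` {0..<int p} \<subseteq> {0..<int p}" using p0 by auto
  have "(\<lambda>y. (d * y) mod int p) ` {0..<int p} = {0..<int p}"
    using endo_inj_surj[OF _ sub inj] by simp
  then show ?thesis using inj by (simp add: bij_betw_def)
qed

definition Qs :: "nat \<Rightarrow> int set" where
  "Qs p = {y \<in> {1..<int p}. QuadRes (int p) y}"

lemma sq_bij:
  assumes "prime p" "2 < p"
  shows "bij_betw (\<lambda>i::nat. (int i)^2 mod int p) {1..<(p+1) div 2} (Qs p)"
proof -
  have pp: "prime (int p)" using assms(1) by simp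
  have p0: "int p > 0" using assms(1) prime_gt_0_nat by simp
  have odd: "odd p" using assms prime_odd_nat by auto
  have inj: "inj_on (\<lambda>i::nat. (int i)^2 mod int p) {1..<(p+1) div 2}"
  proof (rule inj_onI)
    fix x y :: nat assume x: "x \<in> {1..<(p+1) div 2}" and y: "y \<in> {1..<(p+1) div 2}"
      and e: "(int x)^2 mod int p = (int y)^2 mod int p"
    then have "int p dvd (int x)^2 - (int y)^2" by (simp add: mod_eq_dvd_iff)
    moreover have "(int x)^2 - (int y)^2 = (int x - int y) * (int x + int y)" by (simp add: power2_eq_square algebra_simps)
    ultimately have "int p dvd (int x - int y) * (int x + int y)" by simp
    then have "int p dvd (int x - int y) \<or> int p dvd (int x + int y)" using pp by (simp add: prime_dvd_mult_iff)
    moreover have "\<bar>int x - int y\<bar> < int p" using x y by auto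
    moreover have "0 < int x + int y" using x y by auto
    moreover have "x + y < p" using x y odd by (auto elim!: oddE)
    then have "int x + int y < int p" by linarith
    ultimately show "x = y"
    proof -
      assume a: "int p dvd (int x - int y) \<or> int p dvd (int x + int y)" "\<bar>int x - int y\<bar> < int p"
        "0 < int x + int y" "int x + int y < int p"
      have "\<not> int p dvd (int x + int y)" using zdvd_not_zless[OF a(3) a(4)] .
      then have d: "int p dvd (int x - int y)" using a(1) by blast
      show "x = y"
      proof (rule ccontr)
        assume "x \<noteq> y"
        then have "int x - int y \<noteq> 0" by simp
        then have "\<bar>int p\<bar> \<le> \<bar>int x - int y\<bar>" using dvd_imp_le_int[of "int x - int y" "int p"] d by simp
        then show False using a(2) by linarith
      qed
    qed
  qed
  have img: "(\<lambda>i::nat. (int i)^2 mod int p) ` {1..<(p+1) div 2} = Qs p"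
  proof
    show "(\<lambda>i::nat. (int i)^2 mod int p) ` {1..<(p+1) div 2} \<subseteq> Qs p"
    proof
      fix y assume "y \<in> (\<lambda>i::nat. (int i)^2 mod int p) ` {1..<(p+1) div 2}"
      then obtain i where i: "i \<in> {1..<(p+1) div 2}" "y = (int i)^2 mod int p" by blast
      have "i < p" using i odd by (auto elim!: oddE)
      have "\<not> int p dvd int i" using \<open>i < p\<close> i zdvd_imp_le[of "int p" "int i"] by auto
      then have "\<not> int p dvd (int i)^2" using pp by (simp add: prime_dvd_power_iff)
      then have "y \<noteq> 0" using i(2) by (simp add: dvd_eq_mod_eq_0)
      moreover have "y \<ge> 0" "y < int p" using i(2) p0 by auto
      moreover have "QuadRes (int p) y" unfolding QuadRes_def i(2) by (auto simp: cong_def)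
      ultimately show "y \<in> Qs p" unfolding Qs_def by auto
    qed
  next
    show "Qs p \<subseteq> (\<lambda>i::nat. (int i)^2 mod int p) ` {1..<(p+1) div 2}"
    proof
      fix y assume y: "y \<in> Qs p"
      then obtain s where s: "[s^2 = y] (mod int p)" unfolding Qs_def QuadRes_def by blast
      define r where "r = s mod int p"
      have r: "0 \<le> r" "r < int p" using p0 by (auto simp: r_def)
      have "[r = s] (mod int p)" by (simp add: r_def cong_def)
      then have "[r^2 = s^2] (mod int p)" by (rule cong_pow)
      then have rs: "[r^2 = y] (mod int p)" using s by (rule cong_trans)
      have "r \<noteq> 0"
      proof
        assume "r = 0"
        then have "[y = 0] (mod int p)" using rs by (simp add: cong_sym)
        then show False using y unfolding Qs_def by (auto simp: cong_def)
      qed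
      have hh: "(int p + 1) div 2 = int ((p+1) div 2)" by (simp add: zdiv_int)
      have ymod: "y mod int p = y" using y unfolding Qs_def by auto
      show "y \<in> (\<lambda>i::nat. (int i)^2 mod int p) ` {1..<(p+1) div 2}"
      proof (cases "r < (int p + 1) div 2")
        case True
        have "y = (int (nat r))^2 mod int p" using rs r ymod by (simp add: cong_def)
        moreover have "nat r \<in> {1..<(p+1) div 2}" using True \<open>r \<noteq> 0\<close> r unfolding hh by auto
        ultimately show ?thesis by blast
      next
        case False
        define t where "t = int p - r"
        have "t^2 - r^2 = int p * (int p - 2 * r)" unfolding t_def by (simp add: power2_eq_square algebra_simps)
        then have "[t^2 = r^2] (mod int p)" unfolding cong_iff_dvd_diff by simp
        then have t2: "[t^2 = y] (mod int p)" using rs cong_trans by blast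
        have tn: "y = (int (nat t))^2 mod int p" using t2 r t_def ymod by (simp add: cong_def)
        have "2 * ((p+1) div 2) = p + 1" using odd by (auto elim!: oddE)
        then have e2: "2 * int ((p+1) div 2) = int p + 1" by linarith
        have "int ((p+1) div 2) \<le> r" using False unfolding hh by simp
        then have "nat t \<in> {1..<(p+1) div 2}" using r t_def e2 by auto
        then show ?thesis using tn by blast
      qed
    qed
  qed
  show ?thesis using inj img by (simp add: bij_betw_def)
qed

lemma card_Qs: assumes "prime p" "2 < p" shows "card (Qs p) = (p - 1) div 2"
proof -
  have "card (Qs p) = card {1..<(p+1) div 2}" using bij_betw_same_card[OF sq_bij[OF assms]] by simp
  then show ?thesis by simp
qed


lemma p_odd: fixes p :: nat assumes "prime p" "2 < p" shows "odd p"
  using assms prime_odd_nat by auto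

lemma sum_int_range: "(\<Sum>y\<in>{0..<int p}. f y) = (\<Sum>y<p. f (int y))"
proof -
  have "{0..<int p} = int ` {0..<p}" using image_int_atLeastLessThan[of 0 p] by simp
  then have "(\<Sum>y\<in>{0..<int p}. f y) = (\<Sum>y\<in>int ` {0..<p}. f y)" by simp
  also have "\<dots> = (\<Sum>y\<in>{0..<p}. f (int y))" by (simp add: sum.reindex)
  finally show ?thesis by (simp add: lessThan_atLeast0)
qed

lemma orth_int: assumes "p > 0"
  shows "(\<Sum>y\<in>{0..<int p}. E p (c * y)) = (if int p dvd c then of_nat p else 0)"
  unfolding sum_int_range using orth[OF assms] by simp

definition w :: "nat \<Rightarrow> int \<Rightarrow> int" where
  "w p y = 1 + Legendre y (int p)"

definition Sg :: "nat \<Rightarrow> int \<Rightarrow> complex" where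
  "Sg p d = (\<Sum>y\<in>{0..<int p}. of_int (w p y) * E p (-(y * d)))"

definition gam :: "nat \<Rightarrow> complex" where
  "gam p = (\<Sum>y\<in>{0..<int p}. of_int (Legendre y (int p)) * E p (-y))"

lemma Leg_range_pos: assumes "0 < y" "y < int p"
  shows "Legendre y (int p) = (if QuadRes (int p) y then 1 else -1)"
proof -
  have "\<not> [y = 0] (mod int p)" using assms by (auto simp: cong_def)
  then show ?thesis unfolding Legendre_def by simp
qed

lemma sum_w_split:
  fixes f :: "int \<Rightarrow> 'a::comm_ring_1"
  assumes "p > 0"
  shows "(\<Sum>y\<in>{0..<int p}. of_int (w p y) * f y) = f 0 + 2 * (\<Sum>y\<in>Qs p. f y)"
proof -
  have split: "{0..<int p} = insert 0 {1..<int p}" using assms by auto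
  have "(\<Sum>y\<in>{0..<int p}. of_int (w p y) * f y) = of_int (w p 0) * f 0 + (\<Sum>y\<in>{1..<int p}. of_int (w p y) * f y)"
    unfolding split by (subst sum.insert) auto
  also have "of_int (w p 0) * f 0 = f 0" by (simp add: w_def Leg_0)
  also have "(\<Sum>y\<in>{1..<int p}. of_int (w p y) * f y) = (\<Sum>y\<in>{1..<int p}. if QuadRes (int p) y then 2 * f y else 0)"
  proof (rule sum.cong)
    fix y assume "y \<in> {1..<int p}"
    then show "of_int (w p y) * f y = (if QuadRes (int p) y then 2 * f y else 0)"
      using Leg_range_pos[of y p] by (simp add: w_def)
  qed simp
  also have "\<dots> = (\<Sum>y\<in>{y\<in>{1..<int p}. QuadRes (int p) y}. 2 * f y)"
    by (rule sum.inter_filter[symmetric]) simp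
  also have "\<dots> = (\<Sum>y\<in>Qs p. 2 * f y)" unfolding Qs_def ..
  also have "\<dots> = 2 * (\<Sum>y\<in>Qs p. f y)" by (simp add: sum_distrib_left)
  finally show ?thesis .
qed

lemma Sg_quad:
  assumes "prime p" "2 < p"
  shows "1 + 2 * (\<Sum>i\<in>{1..<(p+1) div 2}. E p (-((int i)^2 * d))) = Sg p d"
proof -
  have p0: "p > 0" using assms by simp
  have "(\<Sum>i\<in>{1..<(p+1) div 2}. E p (-((int i)^2 * d)))
      = (\<Sum>i\<in>{1..<(p+1) div 2}. E p (-(((int i)^2 mod int p) * d)))"
  proof (rule sum.cong)
    fix i
    have "[-(((int i)^2 mod int p) * d) = -((int i)^2 * d)] (mod int p)"
      by (intro cong_minus_minus_iff[THEN iffD2] cong_mult cong_refl) (simp add: cong_def)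
    then show "E p (-((int i)^2 * d)) = E p (-(((int i)^2 mod int p) * d))"
      using E_cong[OF p0] by (metis cong_sym)
  qed simp
  also have "\<dots> = (\<Sum>y\<in>Qs p. E p (-(y * d)))"
    by (rule sum.reindex_bij_betw[OF sq_bij[OF assms], of "\<lambda>y. E p (-(y * d))"])
  finally have 1: "(\<Sum>i\<in>{1..<(p+1) div 2}. E p (-((int i)^2 * d))) = (\<Sum>y\<in>Qs p. E p (-(y * d)))" .
  show ?thesis unfolding Sg_def sum_w_split[OF p0] 1 by simp
qed

lemma Sg_nz:
  assumes "prime p" "2 < p" "\<not> int p dvd d"
  shows "Sg p d = of_int (Legendre d (int p)) * gam p"
proof -
  have p0: "p > 0" using assms by simp
  have "Sg p d = (\<Sum>y\<in>{0..<int p}. E p (-d * y)) + (\<Sum>y\<in>{0..<int p}. of_int (Legendre y (int p)) * E p (-(y * d)))"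
    unfolding Sg_def w_def by (simp add: sum.distrib algebra_simps)
  also have "(\<Sum>y\<in>{0..<int p}. E p (-d * y)) = 0" using orth_int[OF p0, of "-d"] assms(3) by simp
  also have "(\<Sum>y\<in>{0..<int p}. of_int (Legendre y (int p)) * E p (-(y * d)))
     = (\<Sum>y\<in>{0..<int p}. of_int (Legendre d (int p)) * (of_int (Legendre ((d * y) mod int p) (int p)) * E p (-((d * y) mod int p))))"
  proof (rule sum.cong)
    fix y
    have "Legendre ((d * y) mod int p) (int p) = Legendre d (int p) * Legendre y (int p)"
      using Leg_mod Leg_mult[OF assms(1,2)] by simp
    then have "Legendre d (int p) * Legendre ((d * y) mod int p) (int p) = Legendre y (int p)"
      using Leg_sq[OF assms(3)] by (simp add: mult.assoc[symmetric])
    moreover have "E p (-((d * y) mod int p)) = E p (-(y * d))"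
    proof -
      have "[-((d * y) mod int p) = -(y * d)] (mod int p)"
        by (intro cong_minus_minus_iff[THEN iffD2]) (simp add: cong_def mult.commute)
      then show ?thesis using E_cong[OF p0] by blast
    qed
    ultimately show "of_int (Legendre y (int p)) * E p (-(y * d)) =
      of_int (Legendre d (int p)) * (of_int (Legendre ((d * y) mod int p) (int p)) * E p (-((d * y) mod int p)))"
      by (metis (no_types, lifting) mult.assoc of_int_mult)
  qed simp
  also have "\<dots> = of_int (Legendre d (int p)) * (\<Sum>y\<in>{0..<int p}. of_int (Legendre ((d * y) mod int p) (int p)) * E p (-((d * y) mod int p)))"
    by (simp add: sum_distrib_left)
  also have "(\<Sum>y\<in>{0..<int p}. of_int (Legendre ((d * y) mod int p) (int p)) * E p (-((d * y) mod int p))) = gam p"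
    unfolding gam_def
    by (rule sum.reindex_bij_betw[OF mult_bij[OF assms(1,3)], of "\<lambda>z. of_int (Legendre z (int p)) * E p (-z)"])
  finally show ?thesis by simp
qed

lemma Sg_0:
  assumes "prime p" "2 < p"
  shows "Sg p 0 = of_nat p"
proof -
  have p0: "p > 0" using assms by simp
  have "Sg p 0 = 1 + 2 * of_nat (card (Qs p))"
    unfolding Sg_def using sum_w_split[OF p0, of "\<lambda>y. (1::complex)"] by simp
  also have "\<dots> = of_nat (1 + 2 * card (Qs p))" by simp
  also have "1 + 2 * card (Qs p) = p" using card_Qs[OF assms] p_odd[OF assms] by (auto elim!: oddE)
  finally show ?thesis .
qed


lemma cnj_Sg: "cnj (Sg p d) = (\<Sum>z\<in>{0..<int p}. of_int (w p z) * E p (z * d))"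
  unfolding Sg_def by (simp add: cnj_E)

lemma parseval:
  assumes p0: "p > 0"
  shows "(\<Sum>d\<in>{0..<int p}. Sg p d * cnj (Sg p d)) = of_nat p * (\<Sum>y\<in>{0..<int p}. of_int (w p y * w p y))"
proof -
  have "(\<Sum>d\<in>{0..<int p}. Sg p d * cnj (Sg p d))
      = (\<Sum>d\<in>{0..<int p}. \<Sum>y\<in>{0..<int p}. \<Sum>z\<in>{0..<int p}. of_int (w p y * w p z) * E p ((z - y) * d))"
  proof (rule sum.cong[OF refl])
    fix d
    have "Sg p d * cnj (Sg p d) = (\<Sum>y\<in>{0..<int p}. \<Sum>z\<in>{0..<int p}. (of_int (w p y) * E p (-(y * d))) * (of_int (w p z) * E p (z * d)))"
      unfolding cnj_Sg unfolding Sg_def by (simp add: sum_product)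
    also have "\<dots> = (\<Sum>y\<in>{0..<int p}. \<Sum>z\<in>{0..<int p}. of_int (w p y * w p z) * E p ((z - y) * d))"
    proof (intro sum.cong refl)
      fix y z
      have "E p (-(y * d)) * E p (z * d) = E p ((z - y) * d)"
        using E_add[of p "-(y*d)" "z*d"] by (simp add: algebra_simps)
      then show "(of_int (w p y) * E p (-(y * d))) * (of_int (w p z) * E p (z * d)) = of_int (w p y * w p z) * E p ((z - y) * d)"
        by (simp add: algebra_simps)
    qed
    finally show "Sg p d * cnj (Sg p d) = (\<Sum>y\<in>{0..<int p}. \<Sum>z\<in>{0..<int p}. of_int (w p y * w p z) * E p ((z - y) * d))" .
  qed
  also have "\<dots> = (\<Sum>y\<in>{0..<int p}. \<Sum>d\<in>{0..<int p}. \<Sum>z\<in>{0..<int p}. of_int (w p y * w p z) * E p ((z - y) * d))"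
    by (rule sum.swap)
  also have "\<dots> = (\<Sum>y\<in>{0..<int p}. \<Sum>z\<in>{0..<int p}. \<Sum>d\<in>{0..<int p}. of_int (w p y * w p z) * E p ((z - y) * d))"
    by (rule sum.cong[OF refl], rule sum.swap)
  also have "\<dots> = (\<Sum>y\<in>{0..<int p}. \<Sum>z\<in>{0..<int p}. of_int (w p y * w p z) * (if z = y then of_nat p else 0))"
  proof (intro sum.cong refl)
    fix y z assume y: "y \<in> {0..<int p}" and z: "z \<in> {0..<int p}"
    have "int p dvd (z - y) \<longleftrightarrow> z = y"
    proof
      assume d: "int p dvd (z - y)"
      show "z = y"
      proof (rule ccontr)
        assume "z \<noteq> y"
        then have "\<bar>int p\<bar> \<le> \<bar>z - y\<bar>" using dvd_imp_le_int[of "z - y" "int p"] d by simp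
        then show False using y z by auto
      qed
    qed simp
    then show "(\<Sum>d\<in>{0..<int p}. of_int (w p y * w p z) * E p ((z - y) * d)) = of_int (w p y * w p z) * (if z = y then of_nat p else 0)"
      using orth_int[OF p0, of "z - y"] by (simp add: sum_distrib_left[symmetric])
  qed
  also have "\<dots> = (\<Sum>y\<in>{0..<int p}. of_int (w p y * w p y) * of_nat p)"
    by (simp add: if_distrib cong: if_cong)
  also have "\<dots> = of_nat p * (\<Sum>y\<in>{0..<int p}. of_int (w p y * w p y))"
    by (simp add: sum_distrib_left mult.commute)
  finally show ?thesis .
qed

lemma w_Qs: "y \<in> Qs p \<Longrightarrow> w p y = 2"
  unfolding Qs_def w_def using Leg_range_pos[of y p] by auto

lemma sum_w2:
  assumes "prime p" "2 < p"
  shows "(\<Sum>y\<in>{0..<int p}. (of_int (w p y * w p y) :: complex)) = 2 * of_nat p - 1"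
proof -
  have p0: "p > 0" using assms by simp
  have "(\<Sum>y\<in>{0..<int p}. (of_int (w p y * w p y) :: complex)) = (\<Sum>y\<in>{0..<int p}. of_int (w p y) * of_int (w p y))"
    by simp
  also have "\<dots> = of_int (w p 0) + 2 * (\<Sum>y\<in>Qs p. of_int (w p y))"
    by (rule sum_w_split[OF p0])
  also have "(\<Sum>y\<in>Qs p. (of_int (w p y)::complex)) = (\<Sum>y\<in>Qs p. 2)"
    using w_Qs by (intro sum.cong) auto
  also have "\<dots> = 2 * of_nat (card (Qs p))" by simp
  also have "w p 0 = 1" by (simp add: w_def Leg_0)
  finally have "(\<Sum>y\<in>{0..<int p}. (of_int (w p y * w p y) :: complex)) = 1 + 4 * of_nat (card (Qs p))" by simp
  also have "\<dots> = of_nat (1 + 4 * card (Qs p))" by simp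
  also have "1 + 4 * card (Qs p) = 2 * p - 1" using card_Qs[OF assms] p_odd[OF assms] by (auto elim!: oddE)
  also have "(of_nat (2 * p - 1) :: complex) = 2 * of_nat p - 1" using p0 by (simp add: of_nat_diff)
  finally show ?thesis .
qed

lemma gam_norm:
  assumes "prime p" "2 < p"
  shows "cmod (gam p) = sqrt (real p)"
proof -
  have p0: "p > 0" using assms by simp
  let ?g = "gam p * cnj (gam p)"
  have split: "{0..<int p} = insert 0 {1..<int p}" using p0 by auto
  have "(\<Sum>d\<in>{0..<int p}. Sg p d * cnj (Sg p d)) = Sg p 0 * cnj (Sg p 0) + (\<Sum>d\<in>{1..<int p}. Sg p d * cnj (Sg p d))"
    unfolding split by (subst sum.insert) auto
  also have "Sg p 0 * cnj (Sg p 0) = of_nat p * of_nat p" using Sg_0[OF assms] by simp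
  also have "(\<Sum>d\<in>{1..<int p}. Sg p d * cnj (Sg p d)) = (\<Sum>d\<in>{1..<int p}. ?g)"
  proof (rule sum.cong[OF refl])
    fix d assume d: "d \<in> {1..<int p}"
    then have nd: "\<not> int p dvd d" using zdvd_not_zless[of d "int p"] by auto
    have "Sg p d * cnj (Sg p d) = of_int (Legendre d (int p) * Legendre d (int p)) * ?g"
      using Sg_nz[OF assms nd] by (simp add: algebra_simps)
    then show "Sg p d * cnj (Sg p d) = ?g" using Leg_sq[OF nd] by simp
  qed
  also have "\<dots> = of_nat (p - 1) * ?g"
  proof -
    have "nat (int p - 1) = p - 1" by (cases p) auto
    then show ?thesis by simp
  qed
  finally have "of_nat p * (2 * of_nat p - 1) = of_nat p * of_nat p + of_nat (p - 1) * ?g"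
    using parseval[OF p0] sum_w2[OF assms] by simp
  then have "of_nat (p - 1) * ?g = of_nat p * of_nat (p - 1)"
    using p0 by (simp add: of_nat_diff algebra_simps)
  then have "?g = of_nat p" using assms by (simp add: mult.commute)
  then have "complex_of_real ((cmod (gam p))^2) = of_real (real p)"
    using complex_norm_square[of "gam p"] by simp
  then have "(cmod (gam p))^2 = real p" using of_real_eq_iff by blast
  then show ?thesis by (simp add: real_sqrt_unique)
qed


definition sc :: "nat \<Rightarrow> nat \<Rightarrow> real" where
  "sc p i = (if i = 0 then sqrt (1 / real p) else sqrt (2 / real p))"

lemma Phi_E: "j < p \<Longrightarrow> paley_matrix p i j = of_real (sc p i) * E p (-((int i)^2 * int j))"
  unfolding paley_matrix_def sc_def E_def by simp

lemma Phi_last: "paley_matrix p i p = (if i = 0 then 1 else 0)"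
  unfolding paley_matrix_def by simp

definition G :: "nat \<Rightarrow> nat \<Rightarrow> nat \<Rightarrow> complex" where
  "G p j k = (\<Sum>i<(p+1) div 2. paley_matrix p i j * cnj (paley_matrix p i k))"

lemma G1:
  assumes "prime p" "2 < p" "j < p" "k < p"
  shows "G p j k = (if j = k then 1 else 0) + of_int (chi p (int j - int k)) * gam p / of_nat p"
proof -
  have p0: "p > 0" using assms by simp
  define d where "d = int j - int k"
  have M: "{..<(p+1) div 2} = insert 0 {1..<(p+1) div 2}" using assms by auto
  have tm: "paley_matrix p i j * cnj (paley_matrix p i k) = of_real (sc p i * sc p i) * E p (-((int i)^2 * d))" for i
  proof -
    have "E p (-((int i)^2 * int j)) * cnj (E p (-((int i)^2 * int k))) = E p (-((int i)^2 * d))"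
      unfolding E_mult_cnj d_def by (simp add: algebra_simps)
    then show ?thesis using Phi_E[OF assms(3), of i] Phi_E[OF assms(4), of i] by (simp add: algebra_simps)
  qed
  have s0: "sc p 0 * sc p 0 = 1 / real p" unfolding sc_def by simp
  have s1: "i \<noteq> 0 \<Longrightarrow> sc p i * sc p i = 2 / real p" for i unfolding sc_def by simp
  have "G p j k = of_real (1 / real p) + (\<Sum>i\<in>{1..<(p+1) div 2}. of_real (2 / real p) * E p (-((int i)^2 * d)))"
    unfolding G_def M tm by (subst sum.insert) (auto simp: s0 s1 intro!: sum.cong)
  also have "\<dots> = (1 + 2 * (\<Sum>i\<in>{1..<(p+1) div 2}. E p (-((int i)^2 * d)))) / of_nat p"
    by (simp add: sum_divide_distrib[symmetric] sum_distrib_left[symmetric] add_divide_distrib)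
  also have "\<dots> = Sg p d / of_nat p" using Sg_quad[OF assms(1,2)] by simp
  finally have GS: "G p j k = Sg p d / of_nat p" .
  show ?thesis
  proof (cases "j = k")
    case True
    then have "d = 0" unfolding d_def by simp
    then show ?thesis using GS Sg_0[OF assms(1,2)] p0 True by (simp add: chi_def Leg_0)
  next
    case False
    have "\<not> int p dvd d"
    proof
      assume "int p dvd d"
      moreover have "d \<noteq> 0" using False d_def by simp
      ultimately have "\<bar>int p\<bar> \<le> \<bar>d\<bar>" using dvd_imp_le_int by blast
      then show False using assms(3,4) d_def by auto
    qed
    then show ?thesis using GS Sg_nz[OF assms(1,2)] False by (simp add: chi_def d_def)
  qed
qed

lemma G2: assumes "j < p" "p > 0" shows "G p j p = of_real (sqrt (1 / real p))"
proof -
  have M: "{..<(p+1) div 2} = insert 0 {1..<(p+1) div 2}" using assms by auto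
  show ?thesis unfolding G_def M using assms
    by (subst sum.insert) (auto simp: Phi_last Phi_E sc_def)
qed

lemma G3: assumes "k < p" "p > 0" shows "G p p k = of_real (sqrt (1 / real p))"
proof -
  have M: "{..<(p+1) div 2} = insert 0 {1..<(p+1) div 2}" using assms by auto
  show ?thesis unfolding G_def M using assms
    by (subst sum.insert) (auto simp: Phi_last Phi_E sc_def cnj_E)
qed

lemma G4: assumes "p > 0" shows "G p p p = 1"
proof -
  have M: "{..<(p+1) div 2} = insert 0 {1..<(p+1) div 2}" using assms by auto
  show ?thesis unfolding G_def M using assms
    by (subst sum.insert) (auto simp: Phi_last)
qed

lemma expand:
  fixes x :: "nat \<Rightarrow> real"
  shows "complex_of_real (\<Sum>i<M. (cmod (\<Sum>j<N. Phi i j * complex_of_real (x j)))\<^sup>2)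
       = (\<Sum>j<N. \<Sum>k<N. of_real (x j * x k) * (\<Sum>i<M. Phi i j * cnj (Phi i k)))"
proof -
  have "complex_of_real (\<Sum>i<M. (cmod (\<Sum>j<N. Phi i j * complex_of_real (x j)))\<^sup>2)
      = (\<Sum>i<M. (\<Sum>j<N. Phi i j * complex_of_real (x j)) * cnj (\<Sum>k<N. Phi i k * complex_of_real (x k)))"
    unfolding of_real_sum by (rule sum.cong[OF refl], rule complex_norm_square)
  also have "\<dots> = (\<Sum>i<M. \<Sum>j<N. \<Sum>k<N. of_real (x j * x k) * (Phi i j * cnj (Phi i k)))"
    by (simp add: sum_product algebra_simps)
  also have "\<dots> = (\<Sum>j<N. \<Sum>i<M. \<Sum>k<N. of_real (x j * x k) * (Phi i j * cnj (Phi i k)))"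
    by (rule sum.swap)
  also have "\<dots> = (\<Sum>j<N. \<Sum>k<N. \<Sum>i<M. of_real (x j * x k) * (Phi i j * cnj (Phi i k)))"
    by (rule sum.cong[OF refl], rule sum.swap)
  also have "\<dots> = (\<Sum>j<N. \<Sum>k<N. of_real (x j * x k) * (\<Sum>i<M. Phi i j * cnj (Phi i k)))"
    by (simp add: sum_distrib_left)
  finally show ?thesis .
qed

definition Qf :: "nat \<Rightarrow> (nat \<Rightarrow> real) \<Rightarrow> real" where
  "Qf p x = (\<Sum>j<p. \<Sum>k<p. x j * x k * real_of_int (chi p (int j - int k)))"

lemma key:
  fixes x :: "nat \<Rightarrow> real"
  assumes "prime p" "2 < p"
  shows "complex_of_real (\<Sum>i<(p+1) div 2. (cmod (\<Sum>j<p+1. paley_matrix p i j * complex_of_real (x j)))\<^sup>2)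
     = of_real ((\<Sum>j<p+1. (x j)\<^sup>2) + 2 * sqrt (1 / real p) * x p * (\<Sum>j<p. x j))
       + gam p / of_nat p * of_real (Qf p x)"
proof -
  have p0: "p > 0" using assms by simp
  let ?a = "\<lambda>j k. of_real (x j * x k) * G p j k"
  have "complex_of_real (\<Sum>i<(p+1) div 2. (cmod (\<Sum>j<p+1. paley_matrix p i j * complex_of_real (x j)))\<^sup>2)
     = (\<Sum>j<p+1. \<Sum>k<p+1. ?a j k)" unfolding expand G_def ..
  also have "\<dots> = (\<Sum>j<p. \<Sum>k<p. ?a j k) + (\<Sum>j<p. ?a j p) + (\<Sum>k<p. ?a p k) + ?a p p"
    by (simp add: sum.distrib algebra_simps)
  also have "(\<Sum>j<p. \<Sum>k<p. ?a j k) = (\<Sum>j<p. \<Sum>k<p. (if j = k then of_real (x j * x k) else 0)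
        + gam p / of_nat p * of_real (x j * x k * real_of_int (chi p (int j - int k))))"
  proof (intro sum.cong refl)
    fix j k assume "j \<in> {..<p}" "k \<in> {..<p}"
    then show "?a j k = (if j = k then of_real (x j * x k) else 0)
        + gam p / of_nat p * of_real (x j * x k * real_of_int (chi p (int j - int k)))"
      using G1[OF assms, of j k] by (simp add: algebra_simps)
  qed
  also have "\<dots> = (\<Sum>j<p. \<Sum>k<p. (if j = k then of_real (x j * x k) else 0))
        + gam p / of_nat p * (\<Sum>j<p. \<Sum>k<p. of_real (x j * x k * real_of_int (chi p (int j - int k))))"
    by (simp add: sum.distrib sum_distrib_left)
  also have "(\<Sum>j<p. \<Sum>k<p. (if j = k then of_real (x j * x k) else 0)) = (\<Sum>j<p. complex_of_real ((x j)\<^sup>2))"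
  proof (rule sum.cong[OF refl])
    fix j assume "j \<in> {..<p}"
    then show "(\<Sum>k<p. (if j = k then complex_of_real (x j * x k) else 0)) = complex_of_real ((x j)\<^sup>2)"
      by (simp add: sum.delta power2_eq_square)
  qed
  also have "(\<Sum>j<p. ?a j p) = (\<Sum>j<p. of_real (sqrt (1 / real p) * x p * x j))"
    using G2[OF _ p0] by (simp add: algebra_simps)
  also have "(\<Sum>k<p. ?a p k) = (\<Sum>j<p. of_real (sqrt (1 / real p) * x p * x j))"
    using G3[OF _ p0] by (simp add: algebra_simps)
  also have "?a p p = of_real ((x p)\<^sup>2)" using G4[OF p0] by (simp add: power2_eq_square)
  finally show ?thesis unfolding Qf_def
    by (simp add: sum_distrib_left algebra_simps)
qed


definition cnt :: "nat set \<Rightarrow> (nat \<Rightarrow> real) \<Rightarrow> nat \<Rightarrow> nat" where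
  "cnt S u i = card {j\<in>S. u i \<le> u j}"

definition Wt :: "nat set \<Rightarrow> (nat \<Rightarrow> real) \<Rightarrow> real" where
  "Wt S u = (\<Sum>i\<in>S. u i / sqrt (real (cnt S u i)))"

lemma cnt_ge1: "finite S \<Longrightarrow> i \<in> S \<Longrightarrow> cnt S u i \<ge> 1"
proof -
  assume a: "finite S" "i \<in> S"
  then have "i \<in> {j\<in>S. u i \<le> u j}" by simp
  moreover have "finite {j\<in>S. u i \<le> u j}" using a by simp
  ultimately have "card {j\<in>S. u i \<le> u j} > 0" using card_gt_0_iff by blast
  then show ?thesis unfolding cnt_def by simp
qed

lemma cnt_le: "finite S \<Longrightarrow> cnt S u i \<le> card S"
  unfolding cnt_def by (intro card_mono) auto

lemma LC1:
  fixes c u :: "nat \<Rightarrow> real"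
  assumes "finite S" "\<And>A. A \<subseteq> S \<Longrightarrow> \<bar>\<Sum>i\<in>A. c i\<bar> \<le> R * sqrt (real (card A))"
    "\<And>i. i \<in> S \<Longrightarrow> u i \<ge> 0" "R \<ge> 0"
  shows "\<bar>\<Sum>i\<in>S. c i * u i\<bar> \<le> R * Wt S u"
  using assms
proof (induction "card S" arbitrary: S u rule: less_induct)
  case less
  show ?case
  proof (cases "S = {}")
    case True then show ?thesis by (simp add: Wt_def)
  next
    case False
    note fin = less.prems(1)
    define m where "m = Min (u ` S)"
    obtain i0 where i0: "i0 \<in> S" "u i0 = m" unfolding m_def using False fin
      by (metis (mono_tags, lifting) Min_in finite_imageI image_iff image_is_empty)
    have mle: "i \<in> S \<Longrightarrow> m \<le> u i" for i unfolding m_def using fin by simp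
    have m0: "m \<ge> 0" using less.prems(3)[OF i0(1)] i0(2) by simp
    define S' where "S' = {i\<in>S. m < u i}"
    define u' where "u' = (\<lambda>i. u i - m)"
    have S'S: "S' \<subseteq> S" unfolding S'_def by auto
    have finS': "finite S'" using fin S'S finite_subset by blast
    have "i0 \<notin> S'" unfolding S'_def using i0 by simp
    then have "S' \<subset> S" using S'S i0(1) by blast
    then have cardlt: "card S' < card S" by (rule psubset_card_mono[OF fin])
    have IH: "\<bar>\<Sum>i\<in>S'. c i * u' i\<bar> \<le> R * Wt S' u'"
    proof (rule less.hyps[OF cardlt finS'])
      show "\<And>A. A \<subseteq> S' \<Longrightarrow> \<bar>\<Sum>i\<in>A. c i\<bar> \<le> R * sqrt (real (card A))"
        using less.prems(2) S'S by blast
      show "\<And>i. i \<in> S' \<Longrightarrow> u' i \<ge> 0" unfolding S'_def u'_def by auto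
      show "R \<ge> 0" by fact
    qed
    have cnt_eq: "cnt S' u' i = cnt S u i" if "i \<in> S'" for i
    proof -
      have "{j\<in>S'. u' i \<le> u' j} = {j\<in>S. u i \<le> u j}"
        using that unfolding S'_def u'_def by auto
      then show ?thesis unfolding cnt_def by simp
    qed
    have "(\<Sum>i\<in>S. c i * u i) = m * (\<Sum>i\<in>S. c i) + (\<Sum>i\<in>S. c i * u' i)"
      unfolding u'_def by (simp add: sum_distrib_left sum.distrib[symmetric] algebra_simps)
    also have "(\<Sum>i\<in>S. c i * u' i) = (\<Sum>i\<in>S'. c i * u' i)"
      by (rule sum.mono_neutral_right[OF fin S'S]) (auto simp: S'_def u'_def dest: mle)
    finally have eq1: "(\<Sum>i\<in>S. c i * u i) = m * (\<Sum>i\<in>S. c i) + (\<Sum>i\<in>S'. c i * u' i)" .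
    have Wt': "Wt S' u' = (\<Sum>i\<in>S. (u i - m) / sqrt (real (cnt S u i)))"
    proof -
      have "Wt S' u' = (\<Sum>i\<in>S'. (u i - m) / sqrt (real (cnt S u i)))"
        unfolding Wt_def using cnt_eq by (simp add: u'_def)
      also have "\<dots> = (\<Sum>i\<in>S. (u i - m) / sqrt (real (cnt S u i)))"
        by (rule sum.mono_neutral_left[OF fin S'S]) (auto simp: S'_def dest: mle)
      finally show ?thesis .
    qed
    have n: "sqrt (real (card S)) \<le> (\<Sum>i\<in>S. 1 / sqrt (real (cnt S u i)))"
    proof -
      have pos: "card S > 0" using False fin by (simp add: card_gt_0_iff)
      have "(\<Sum>i\<in>S. 1 / sqrt (real (card S))) \<le> (\<Sum>i\<in>S. 1 / sqrt (real (cnt S u i)))"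
      proof (rule sum_mono)
        fix i assume "i \<in> S"
        then have "cnt S u i \<ge> 1" "cnt S u i \<le> card S" using cnt_ge1 cnt_le fin by auto
        then show "1 / sqrt (real (card S)) \<le> 1 / sqrt (real (cnt S u i))"
          by (intro divide_left_mono) auto
      qed
      also have "(\<Sum>i\<in>S. 1 / sqrt (real (card S))) = real (card S) / sqrt (real (card S))" by simp
      also have "\<dots> = sqrt (real (card S))" using pos by (simp add: real_div_sqrt)
      finally show ?thesis .
    qed
    have "\<bar>\<Sum>i\<in>S. c i * u i\<bar> \<le> m * \<bar>\<Sum>i\<in>S. c i\<bar> + \<bar>\<Sum>i\<in>S'. c i * u' i\<bar>"
      unfolding eq1 using m0 by (simp add: abs_mult abs_triangle_ineq order_trans[OF abs_triangle_ineq])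
    also have "\<dots> \<le> m * (R * sqrt (real (card S))) + R * Wt S' u'"
      using less.prems(2)[of S] m0 IH by (intro add_mono mult_left_mono) auto
    also have "\<dots> \<le> R * (m * (\<Sum>i\<in>S. 1 / sqrt (real (cnt S u i)))) + R * Wt S' u'"
      using n m0 \<open>R \<ge> 0\<close> by (simp add: mult.left_commute mult_left_mono)
    also have "\<dots> = R * Wt S u"
    proof -
      have "m * (\<Sum>i\<in>S. 1 / sqrt (real (cnt S u i))) + Wt S' u'
          = m * (\<Sum>i\<in>S. 1 / sqrt (real (cnt S u i))) + (\<Sum>i\<in>S. (u i - m) / sqrt (real (cnt S u i)))"
        by (simp only: Wt')
      also have "\<dots> = Wt S u"
        unfolding Wt_def by (simp add: sum_distrib_left sum.distrib[symmetric] diff_divide_distrib)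
      finally have "m * (\<Sum>i\<in>S. 1 / sqrt (real (cnt S u i))) + Wt S' u' = Wt S u" .
      then show ?thesis by (simp add: distrib_left[symmetric])
    qed
    finally show ?thesis .
  qed
qed

lemma LC2:
  assumes "finite S"
  shows "Wt S u \<le> sqrt (\<Sum>i\<in>S. (u i)\<^sup>2) * sqrt (\<Sum>i\<in>S. 1 / real (cnt S u i))"
proof -
  have "(Wt S u)\<^sup>2 \<le> (\<Sum>i\<in>S. (u i)\<^sup>2) * (\<Sum>i\<in>S. (1 / sqrt (real (cnt S u i)))\<^sup>2)"
    unfolding Wt_def using Cauchy_Schwarz_ineq_sum[of u "\<lambda>i. 1 / sqrt (real (cnt S u i))" S]
    by (simp add: divide_inverse)
  also have "(\<Sum>i\<in>S. (1 / sqrt (real (cnt S u i)))\<^sup>2) = (\<Sum>i\<in>S. 1 / real (cnt S u i))"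
    by (intro sum.cong refl) (simp add: power_divide)
  finally have "(Wt S u)\<^sup>2 \<le> (\<Sum>i\<in>S. (u i)\<^sup>2) * (\<Sum>i\<in>S. 1 / real (cnt S u i))" .
  then have "\<bar>Wt S u\<bar> \<le> sqrt ((\<Sum>i\<in>S. (u i)\<^sup>2) * (\<Sum>i\<in>S. 1 / real (cnt S u i)))"
    using real_le_rsqrt real_sqrt_abs by (metis real_sqrt_le_mono)
  then show ?thesis by (simp add: real_sqrt_mult)
qed

lemma LC3:
  assumes "finite S"
  shows "(\<Sum>i\<in>S. 1 / real (cnt S u i)) \<le> harm (card S)"
  using assms
proof (induction "card S" arbitrary: S)
  case 0
  then show ?case by (simp add: harm_def)
next
  case (Suc n)
  then have ne: "S \<noteq> {}" by auto
  define m where "m = Min (u ` S)"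
  obtain i0 where i0: "i0 \<in> S" "u i0 = m" unfolding m_def using ne Suc.prems
    by (metis (mono_tags, lifting) Min_in finite_imageI image_iff image_is_empty)
  have mle: "i \<in> S \<Longrightarrow> m \<le> u i" for i unfolding m_def using Suc.prems by simp
  define S' where "S' = S - {i0}"
  have cS': "card S' = n" using Suc.hyps(2) i0(1) Suc.prems unfolding S'_def by simp
  have fS': "finite S'" using Suc.prems S'_def by simp
  have IH: "(\<Sum>i\<in>S'. 1 / real (cnt S' u i)) \<le> harm n" using Suc.hyps(1)[of S'] cS' fS' by simp
  have c0: "cnt S u i0 = Suc n"
  proof -
    have "{j\<in>S. u i0 \<le> u j} = S" using i0 mle by auto
    then show ?thesis unfolding cnt_def using Suc.hyps(2) by simp
  qed
  have "(\<Sum>i\<in>S. 1 / real (cnt S u i)) = 1 / real (cnt S u i0) + (\<Sum>i\<in>S'. 1 / real (cnt S u i))"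
    unfolding S'_def using Suc.prems i0(1) by (simp add: sum.remove)
  also have "(\<Sum>i\<in>S'. 1 / real (cnt S u i)) \<le> (\<Sum>i\<in>S'. 1 / real (cnt S' u i))"
  proof (rule sum_mono)
    fix i assume i: "i \<in> S'"
    have "cnt S' u i \<le> cnt S u i" unfolding cnt_def S'_def using Suc.prems
      by (intro card_mono) auto
    moreover have "cnt S' u i \<ge> 1" using cnt_ge1[OF fS' i] .
    ultimately show "1 / real (cnt S u i) \<le> 1 / real (cnt S' u i)"
      by (intro divide_left_mono) auto
  qed
  finally have "(\<Sum>i\<in>S. 1 / real (cnt S u i)) \<le> 1 / real (Suc n) + harm n" using c0 IH by simp
  also have "\<dots> = harm (Suc n)" by (simp add: harm_Suc divide_inverse)
  finally show ?case using Suc.hyps(2) by simp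
qed

lemma LC:
  fixes c u :: "nat \<Rightarrow> real"
  assumes "finite S" "\<And>A. A \<subseteq> S \<Longrightarrow> \<bar>\<Sum>i\<in>A. c i\<bar> \<le> R * sqrt (real (card A))"
    "\<And>i. i \<in> S \<Longrightarrow> u i \<ge> 0" "R \<ge> 0"
  shows "\<bar>\<Sum>i\<in>S. c i * u i\<bar> \<le> R * sqrt (harm (card S)) * sqrt (\<Sum>i\<in>S. (u i)\<^sup>2)"
proof -
  have "\<bar>\<Sum>i\<in>S. c i * u i\<bar> \<le> R * Wt S u" by (rule LC1[OF assms])
  also have "\<dots> \<le> R * (sqrt (\<Sum>i\<in>S. (u i)\<^sup>2) * sqrt (\<Sum>i\<in>S. 1 / real (cnt S u i)))"
    using LC2[OF assms(1)] assms(4) by (rule mult_left_mono)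
  also have "\<dots> \<le> R * (sqrt (\<Sum>i\<in>S. (u i)\<^sup>2) * sqrt (harm (card S)))"
    using LC3[OF assms(1), of u] assms(4)
    by (intro mult_left_mono real_sqrt_le_mono) (auto intro: sum_nonneg)
  finally show ?thesis by (simp add: algebra_simps)
qed


lemma BL:
  fixes K :: "nat \<Rightarrow> nat \<Rightarrow> real" and u v :: "nat \<Rightarrow> real"
  assumes fin: "finite T" and HE: "\<And>A B. A \<subseteq> T \<Longrightarrow> B \<subseteq> T \<Longrightarrow>
      \<bar>\<Sum>a\<in>A. \<Sum>b\<in>B. K a b\<bar> \<le> \<rho> * sqrt (real (card A)) * sqrt (real (card B))"
    and \<rho>: "\<rho> \<ge> 0" and u: "\<And>i. i \<in> T \<Longrightarrow> u i \<ge> 0" and v: "\<And>i. i \<in> T \<Longrightarrow> v i \<ge> 0"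
  shows "\<bar>\<Sum>a\<in>T. \<Sum>b\<in>T. u a * v b * K a b\<bar>
     \<le> \<rho> * harm (card T) * sqrt (\<Sum>i\<in>T. (u i)\<^sup>2) * sqrt (\<Sum>i\<in>T. (v i)\<^sup>2)"
proof -
  let ?h = "harm (card T) :: real"
  let ?nv = "sqrt (\<Sum>i\<in>T. (v i)\<^sup>2)"
  have h0: "?h \<ge> 0" by (rule harm_nonneg)
  have step1: "\<bar>\<Sum>b\<in>T. (\<Sum>a\<in>A. K a b) * v b\<bar> \<le> (\<rho> * sqrt (real (card A))) * sqrt ?h * ?nv"
    if A: "A \<subseteq> T" for A
  proof (rule LC[OF fin _ v])
    fix B assume B: "B \<subseteq> T"
    have "(\<Sum>b\<in>B. \<Sum>a\<in>A. K a b) = (\<Sum>a\<in>A. \<Sum>b\<in>B. K a b)" by (rule sum.swap)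
    then show "\<bar>\<Sum>b\<in>B. \<Sum>a\<in>A. K a b\<bar> \<le> \<rho> * sqrt (real (card A)) * sqrt (real (card B))"
      using HE[OF A B] by simp
  next
    show "0 \<le> \<rho> * sqrt (real (card A))" using \<rho> by simp
  qed
  have step2: "\<bar>\<Sum>a\<in>T. (\<Sum>b\<in>T. v b * K a b) * u a\<bar> \<le> (\<rho> * sqrt ?h * ?nv) * sqrt ?h * sqrt (\<Sum>i\<in>T. (u i)\<^sup>2)"
  proof (rule LC[OF fin _ u])
    fix A assume A: "A \<subseteq> T"
    have "(\<Sum>a\<in>A. \<Sum>b\<in>T. v b * K a b) = (\<Sum>b\<in>T. (\<Sum>a\<in>A. K a b) * v b)"
      by (subst sum.swap) (simp add: sum_distrib_right sum_distrib_left mult.commute)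
    then show "\<bar>\<Sum>a\<in>A. \<Sum>b\<in>T. v b * K a b\<bar> \<le> \<rho> * sqrt ?h * ?nv * sqrt (real (card A))"
      using step1[OF A] by (simp add: algebra_simps)
  next
    show "0 \<le> \<rho> * sqrt ?h * ?nv" using \<rho> h0 by (intro mult_nonneg_nonneg real_sqrt_ge_zero sum_nonneg) auto
  qed
  have e1: "(\<Sum>a\<in>T. \<Sum>b\<in>T. u a * v b * K a b) = (\<Sum>a\<in>T. (\<Sum>b\<in>T. v b * K a b) * u a)"
    by (simp add: sum_distrib_right sum_distrib_left algebra_simps)
  have e2: "(\<rho> * sqrt ?h * ?nv) * sqrt ?h * sqrt (\<Sum>i\<in>T. (u i)\<^sup>2) = \<rho> * ?h * sqrt (\<Sum>i\<in>T. (u i)\<^sup>2) * ?nv"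
  proof -
    have hh: "sqrt ?h * sqrt ?h = ?h" using h0 by simp
    have "(\<rho> * sqrt ?h * ?nv) * sqrt ?h * sqrt (\<Sum>i\<in>T. (u i)\<^sup>2) = \<rho> * (sqrt ?h * sqrt ?h) * sqrt (\<Sum>i\<in>T. (u i)\<^sup>2) * ?nv"
      by (simp only: mult_ac)
    then show ?thesis by (simp only: hh)
  qed
  show ?thesis unfolding e1 using step2 unfolding e2 .
qed

lemma QF:
  fixes K :: "nat \<Rightarrow> nat \<Rightarrow> real" and x :: "nat \<Rightarrow> real"
  assumes fin: "finite T" and HE: "\<And>A B. A \<subseteq> T \<Longrightarrow> B \<subseteq> T \<Longrightarrow>
      \<bar>\<Sum>a\<in>A. \<Sum>b\<in>B. K a b\<bar> \<le> \<rho> * sqrt (real (card A)) * sqrt (real (card B))"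
    and \<rho>: "\<rho> \<ge> 0"
  shows "\<bar>\<Sum>a\<in>T. \<Sum>b\<in>T. x a * x b * K a b\<bar> \<le> 2 * \<rho> * harm (card T) * (\<Sum>i\<in>T. (x i)\<^sup>2)"
proof -
  define u where "u = (\<lambda>i. max (x i) 0)"
  define v where "v = (\<lambda>i. max (- x i) 0)"
  have xuv: "x i = u i - v i" for i unfolding u_def v_def by auto
  have u0: "u i \<ge> 0" for i unfolding u_def by simp
  have v0: "v i \<ge> 0" for i unfolding v_def by simp
  have sq: "(x i)\<^sup>2 = (u i)\<^sup>2 + (v i)\<^sup>2" for i unfolding u_def v_def by (auto simp: max_def power2_eq_square)
  let ?h = "harm (card T) :: real"
  let ?B = "\<lambda>f g. (\<Sum>a\<in>T. \<Sum>b\<in>T. f a * g b * K a b)"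
  define nu where "nu = sqrt (\<Sum>i\<in>T. (u i)\<^sup>2)"
  define nv where "nv = sqrt (\<Sum>i\<in>T. (v i)\<^sup>2)"
  have b1: "\<bar>?B u u\<bar> \<le> \<rho> * ?h * nu * nu" unfolding nu_def by (rule BL[OF fin HE \<rho>]) (auto intro: u0)
  have b2: "\<bar>?B u v\<bar> \<le> \<rho> * ?h * nu * nv" unfolding nu_def nv_def by (rule BL[OF fin HE \<rho>]) (auto intro: u0 v0)
  have b3: "\<bar>?B v u\<bar> \<le> \<rho> * ?h * nv * nu" unfolding nu_def nv_def by (rule BL[OF fin HE \<rho>]) (auto intro: u0 v0)
  have b4: "\<bar>?B v v\<bar> \<le> \<rho> * ?h * nv * nv" unfolding nv_def by (rule BL[OF fin HE \<rho>]) (auto intro: v0)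
  have eq: "(\<Sum>a\<in>T. \<Sum>b\<in>T. x a * x b * K a b) = ?B u u - ?B u v - ?B v u + ?B v v"
    unfolding xuv by (simp add: sum_subtractf[symmetric] sum.distrib[symmetric] algebra_simps)
  have "\<bar>\<Sum>a\<in>T. \<Sum>b\<in>T. x a * x b * K a b\<bar> \<le> \<bar>?B u u\<bar> + \<bar>?B u v\<bar> + \<bar>?B v u\<bar> + \<bar>?B v v\<bar>"
    unfolding eq by linarith
  also have "\<dots> \<le> \<rho> * ?h * (nu * nu + 2 * nu * nv + nv * nv)"
    using b1 b2 b3 b4 by (simp add: algebra_simps)
  also have "\<dots> \<le> \<rho> * ?h * (2 * (nu * nu + nv * nv))"
  proof -
    have "2 * nu * nv \<le> nu * nu + nv * nv" using sum_squares_bound[of nu nv] by (simp add: power2_eq_square)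
    then show ?thesis using \<rho> harm_nonneg[where 'a=real] by (intro mult_left_mono) auto
  qed
  also have "nu * nu + nv * nv = (\<Sum>i\<in>T. (x i)\<^sup>2)"
    unfolding nu_def nv_def sq by (simp add: sum.distrib sum_nonneg)
  finally show ?thesis by (simp add: algebra_simps)
qed


lemma abs_sum_le_sqrt_card:
  fixes x :: "nat \<Rightarrow> real"
  shows "\<bar>\<Sum>i\<in>T. x i\<bar> \<le> sqrt (real (card T)) * sqrt (\<Sum>i\<in>T. (x i)\<^sup>2)"
proof -
  have "(\<Sum>i\<in>T. x i * 1)\<^sup>2 \<le> (\<Sum>i\<in>T. (x i)\<^sup>2) * (\<Sum>i\<in>T. 1\<^sup>2)" by (rule Cauchy_Schwarz_ineq_sum)
  then have "(\<Sum>i\<in>T. x i)\<^sup>2 \<le> real (card T) * (\<Sum>i\<in>T. (x i)\<^sup>2)" by (simp add: mult.commute)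
  then have "\<bar>\<Sum>i\<in>T. x i\<bar> \<le> sqrt (real (card T) * (\<Sum>i\<in>T. (x i)\<^sup>2))"
    using real_sqrt_le_mono by fastforce
  then show ?thesis by (simp add: real_sqrt_mult)
qed

lemma rip_from_E:
  assumes pr: "prime p" "2 < p" and Kr: "Kr \<ge> 0" and \<rho>: "\<rho> \<ge> 0"
    and HE: "\<And>A B. A \<subseteq> {0..<p} \<Longrightarrow> B \<subseteq> {0..<p} \<Longrightarrow> real (card A) \<le> Kr \<Longrightarrow> real (card B) \<le> Kr \<Longrightarrow>
       \<bar>\<Sum>a\<in>A. \<Sum>b\<in>B. real_of_int (chi p (int a - int b))\<bar> \<le> \<rho> * sqrt (real (card A)) * sqrt (real (card B))"
    and bound: "(2 * \<rho> * harm p + sqrt Kr) / sqrt (real p) \<le> \<delta>"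
  shows "RIP (paley_matrix p) ((p + 1) div 2) (p + 1) Kr \<delta>"
  unfolding RIP_def
proof (intro allI impI)
  fix x :: "nat \<Rightarrow> real"
  assume supp: "real (card {j \<in> {0..<p + 1}. x j \<noteq> 0}) \<le> Kr"
  have p0: "p > 0" using pr by simp
  have sp: "sqrt (real p) > 0" using p0 by simp
  define T where "T = {j \<in> {0..<p}. x j \<noteq> 0}"
  have finT: "finite T" unfolding T_def by simp
  have cT: "real (card T) \<le> Kr"
  proof -
    have "card T \<le> card {j \<in> {0..<p + 1}. x j \<noteq> 0}" unfolding T_def by (intro card_mono) auto
    then show ?thesis using supp by linarith
  qed
  have "T \<subseteq> {0..<p}" unfolding T_def by auto
  then have cTp: "card T \<le> p" using card_mono[of "{0..<p}" T] by simp
  define ny where "ny = (\<Sum>j<p. (x j)\<^sup>2)"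
  define nx where "nx = (\<Sum>j<p+1. (x j)\<^sup>2)"
  have nxy: "nx = ny + (x p)\<^sup>2" unfolding nx_def ny_def by simp
  have ny0: "ny \<ge> 0" unfolding ny_def by (intro sum_nonneg) auto
  have nyT: "(\<Sum>j\<in>T. (x j)\<^sup>2) = ny" unfolding ny_def T_def
    by (rule sum.mono_neutral_left) (auto simp: lessThan_atLeast0)
  define Q where "Q = Qf p x"
  have QT: "Q = (\<Sum>a\<in>T. \<Sum>b\<in>T. x a * x b * real_of_int (chi p (int a - int b)))"
  proof -
    have "Q = (\<Sum>a\<in>T. \<Sum>b<p. x a * x b * real_of_int (chi p (int a - int b)))"
      unfolding Q_def Qf_def T_def by (rule sum.mono_neutral_right) (auto simp: lessThan_atLeast0)
    also have "\<dots> = (\<Sum>a\<in>T. \<Sum>b\<in>T. x a * x b * real_of_int (chi p (int a - int b)))"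
      unfolding T_def by (intro sum.cong refl sum.mono_neutral_right) (auto simp: lessThan_atLeast0)
    finally show ?thesis .
  qed
  have HT: "\<bar>\<Sum>a\<in>A. \<Sum>b\<in>B. real_of_int (chi p (int a - int b))\<bar> \<le> \<rho> * sqrt (real (card A)) * sqrt (real (card B))"
    if "A \<subseteq> T" "B \<subseteq> T" for A B
  proof (rule HE)
    show "A \<subseteq> {0..<p}" "B \<subseteq> {0..<p}" using that unfolding T_def by auto
    have "card A \<le> card T" "card B \<le> card T" using that finT by (auto intro: card_mono)
    then show "real (card A) \<le> Kr" "real (card B) \<le> Kr" using cT by linarith+
  qed
  have Qb: "\<bar>Q\<bar> \<le> 2 * \<rho> * harm p * ny"
  proof -
    have "\<bar>Q\<bar> \<le> 2 * \<rho> * harm (card T) * ny" unfolding QT nyT[symmetric] by (rule QF[OF finT HT \<rho>])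
    also have "\<dots> \<le> 2 * \<rho> * harm p * ny"
      using harm_mono[OF cTp, where 'a=real] \<rho> ny0 by (intro mult_right_mono mult_left_mono) auto
    finally show ?thesis .
  qed
  define cr where "cr = 2 * sqrt (1 / real p) * x p * (\<Sum>j<p. x j)"
  have crb: "\<bar>cr\<bar> \<le> sqrt Kr * nx / sqrt (real p)"
  proof -
    have s: "(\<Sum>j<p. x j) = (\<Sum>j\<in>T. x j)" unfolding T_def
      by (rule sum.mono_neutral_right) (auto simp: lessThan_atLeast0)
    have "\<bar>\<Sum>j<p. x j\<bar> \<le> sqrt (real (card T)) * sqrt ny"
      unfolding s nyT[symmetric] by (rule abs_sum_le_sqrt_card)
    also have "\<dots> \<le> sqrt Kr * sqrt ny" using cT ny0 by (intro mult_right_mono) auto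
    finally have a: "\<bar>\<Sum>j<p. x j\<bar> \<le> sqrt Kr * sqrt ny" .
    have "\<bar>cr\<bar> = 2 * \<bar>x p\<bar> * \<bar>\<Sum>j<p. x j\<bar> / sqrt (real p)"
      unfolding cr_def by (simp add: abs_mult real_sqrt_divide)
    also have "\<dots> \<le> 2 * \<bar>x p\<bar> * (sqrt Kr * sqrt ny) / sqrt (real p)"
      using a sp by (intro divide_right_mono mult_left_mono) auto
    also have "\<dots> \<le> sqrt Kr * nx / sqrt (real p)"
    proof -
      have "2 * \<bar>x p\<bar> * sqrt ny \<le> (x p)\<^sup>2 + ny"
        using sum_squares_bound[of "\<bar>x p\<bar>" "sqrt ny"] ny0 by (simp add: power2_eq_square)
      then have "2 * \<bar>x p\<bar> * (sqrt Kr * sqrt ny) \<le> sqrt Kr * nx"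
        unfolding nxy using Kr by (metis (no_types, lifting) add.commute mult.left_commute mult_left_mono real_sqrt_ge_zero)
      then show ?thesis using sp by (intro divide_right_mono) auto
    qed
    finally show ?thesis .
  qed
  define D where "D = (\<Sum>i<(p+1) div 2. (cmod (\<Sum>j<p+1. paley_matrix p i j * complex_of_real (x j)))\<^sup>2) - nx"
  have "complex_of_real (D - cr) = gam p / of_nat p * of_real Q"
    using key[OF pr, of x] unfolding D_def cr_def Q_def nx_def by simp
  then have "\<bar>D - cr\<bar> = cmod (gam p) / real p * \<bar>Q\<bar>"
    by (metis norm_divide norm_mult norm_of_nat norm_of_real)
  also have "\<dots> = \<bar>Q\<bar> / sqrt (real p)"
    using gam_norm[OF pr] p0 by (simp add: real_div_sqrt field_simps)
  finally have DQ: "\<bar>D - cr\<bar> = \<bar>Q\<bar> / sqrt (real p)" .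
  have "\<bar>D\<bar> \<le> \<bar>Q\<bar> / sqrt (real p) + \<bar>cr\<bar>" using DQ by linarith
  also have "\<dots> \<le> 2 * \<rho> * harm p * nx / sqrt (real p) + sqrt Kr * nx / sqrt (real p)"
  proof -
    have "2 * \<rho> * harm p * ny \<le> 2 * \<rho> * harm p * nx"
      using nxy \<rho> harm_nonneg[where 'a=real] by (intro mult_left_mono) auto
    then have "\<bar>Q\<bar> \<le> 2 * \<rho> * harm p * nx" using Qb by linarith
    then show ?thesis using crb sp by (intro add_mono divide_right_mono) auto
  qed
  also have "\<dots> = (2 * \<rho> * harm p + sqrt Kr) / sqrt (real p) * nx" by (simp add: add_divide_distrib algebra_simps)
  also have "\<dots> \<le> \<delta> * nx"
    using bound unfolding nx_def by (intro mult_right_mono sum_nonneg) auto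
  finally have "\<bar>D\<bar> \<le> \<delta> * nx" .
  then show "(1 - \<delta>) * (\<Sum>j<p + 1. (x j)\<^sup>2) \<le> (\<Sum>i<(p + 1) div 2. (cmod (\<Sum>j<p + 1. paley_matrix p i j * complex_of_real (x j)))\<^sup>2) \<and>
       (\<Sum>i<(p + 1) div 2. (cmod (\<Sum>j<p + 1. paley_matrix p i j * complex_of_real (x j)))\<^sup>2) \<le> (1 + \<delta>) * (\<Sum>j<p + 1. (x j)\<^sup>2)"
    unfolding D_def nx_def[symmetric] by (simp add: algebra_simps abs_le_iff)
qed


definition Ep :: "nat \<Rightarrow> nat set \<Rightarrow> nat set \<Rightarrow> real" where
  "Ep p A B = (\<Sum>a\<in>A. \<Sum>b\<in>B. real_of_int (chi p (int a - int b)))"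

lemma p_gt2: fixes p :: nat assumes "prime p" "p mod 4 = 1" shows "2 < p"
proof -
  have "p \<ge> 2" using prime_ge_2_nat assms(1) by blast
  moreover have "p \<noteq> 2" using assms(2) by auto
  ultimately show ?thesis by linarith
qed

lemma Leg_minus1:
  assumes "prime p" "p mod 4 = 1"
  shows "Legendre (-1) (int p) = 1"
proof -
  have p2: "2 < p" using p_gt2[OF assms] .
  have "even ((p - 1) div 2)" using assms(2) by presburger
  then have "(-1::int) ^ ((p - 1) div 2) = 1" by simp
  then have c: "[Legendre (-1) (int p) = 1] (mod int p)" using euler_criterion[OF assms(1) p2, of "-1"] by simp
  define L where "L = Legendre (-1) (int p)"
  have r: "L \<in> {-1, 0, 1}" unfolding L_def using Leg_range by auto
  have d: "int p dvd L - 1" using c unfolding L_def by (simp add: cong_iff_dvd_diff)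
  have "L = 1"
  proof (rule ccontr)
    assume "L \<noteq> 1"
    then have nz: "L - 1 \<noteq> 0" by simp
    have "\<bar>int p\<bar> \<le> \<bar>L - 1\<bar>" using dvd_imp_le_int[OF nz d] .
    moreover have "\<bar>L - 1\<bar> \<le> 2" using r by auto
    ultimately show False using p2 by linarith
  qed
  then show ?thesis unfolding L_def by simp
qed

lemma chi_sym:
  assumes "prime p" "p mod 4 = 1"
  shows "chi p (-d) = chi p d"
proof -
  have p2: "2 < p" using p_gt2[OF assms] .
  have "chi p (-d) = Legendre ((-1) * d) (int p)" unfolding chi_def by simp
  also have "\<dots> = Legendre d (int p)" using Leg_mult[OF assms(1) p2, of "-1" d] Leg_minus1[OF assms] by simp
  finally show ?thesis unfolding chi_def .
qed

lemma chi_abs: "\<bar>chi p d\<bar> \<le> 1"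
  unfolding chi_def using Leg_range[of d "int p"] by auto

lemma Ep_sym:
  assumes "prime p" "p mod 4 = 1"
  shows "Ep p A B = Ep p B A"
proof -
  have "Ep p A B = (\<Sum>b\<in>B. \<Sum>a\<in>A. real_of_int (chi p (int a - int b)))" unfolding Ep_def by (rule sum.swap)
  also have "\<dots> = Ep p B A" unfolding Ep_def
  proof (intro sum.cong refl)
    fix a b
    have "chi p (-(int a - int b)) = chi p (int a - int b)" by (rule chi_sym[OF assms])
    then show "real_of_int (chi p (int a - int b)) = real_of_int (chi p (int b - int a))" by simp
  qed
  finally show ?thesis .
qed

lemma Ep_triv: "finite A \<Longrightarrow> finite B \<Longrightarrow> \<bar>Ep p A B\<bar> \<le> real (card A) * real (card B)"
proof -
  assume f: "finite A" "finite B"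
  have "\<bar>Ep p A B\<bar> \<le> (\<Sum>a\<in>A. \<bar>\<Sum>b\<in>B. real_of_int (chi p (int a - int b))\<bar>)" unfolding Ep_def by (rule sum_abs)
  also have "\<dots> \<le> (\<Sum>a\<in>A. \<Sum>b\<in>B. \<bar>real_of_int (chi p (int a - int b))\<bar>)" by (intro sum_mono sum_abs)
  also have "\<dots> \<le> (\<Sum>a\<in>A. \<Sum>b\<in>B. 1)"
  proof (intro sum_mono)
    fix a b
    have "\<bar>chi p (int a - int b)\<bar> \<le> 1" by (rule chi_abs)
    then have "real_of_int \<bar>chi p (int a - int b)\<bar> \<le> 1" by simp
    then show "\<bar>real_of_int (chi p (int a - int b))\<bar> \<le> 1" by (simp only: of_int_abs)
  qed
  finally show ?thesis by simp
qed

lemma Ep_union1: "finite X \<Longrightarrow> finite Y \<Longrightarrow> X \<inter> Y = {} \<Longrightarrow> Ep p (X \<union> Y) B = Ep p X B + Ep p Y B"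
  unfolding Ep_def by (rule sum.union_disjoint)

lemma Ep_union2: "finite X \<Longrightarrow> finite Y \<Longrightarrow> X \<inter> Y = {} \<Longrightarrow> Ep p A (X \<union> Y) = Ep p A X + Ep p A Y"
  unfolding Ep_def by (simp add: sum.union_disjoint sum.distrib)

lemma Ep_decomp:
  assumes "finite A" "finite B"
  shows "Ep p A B = Ep p (A \<inter> B) (A \<inter> B) + Ep p (A \<inter> B) (B - A) + Ep p (A - B) B"
proof -
  have e1: "A = (A \<inter> B) \<union> (A - B)" by auto
  have d1: "(A \<inter> B) \<inter> (A - B) = {}" by auto
  have "Ep p ((A \<inter> B) \<union> (A - B)) B = Ep p (A \<inter> B) B + Ep p (A - B) B"
    using assms by (intro Ep_union1 d1) auto
  then have 1: "Ep p A B = Ep p (A \<inter> B) B + Ep p (A - B) B" using e1 by simp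
  have e2: "B = (A \<inter> B) \<union> (B - A)" by auto
  have d2: "(A \<inter> B) \<inter> (B - A) = {}" by auto
  have "Ep p (A \<inter> B) ((A \<inter> B) \<union> (B - A)) = Ep p (A \<inter> B) (A \<inter> B) + Ep p (A \<inter> B) (B - A)"
    using assms by (intro Ep_union2 d2) auto
  then have 2: "Ep p (A \<inter> B) B = Ep p (A \<inter> B) (A \<inter> B) + Ep p (A \<inter> B) (B - A)" using e2 by simp
  show ?thesis using 1 2 by simp
qed


lemma sqrt_card_mono: "finite B \<Longrightarrow> A \<subseteq> B \<Longrightarrow> sqrt (real (card A)) \<le> sqrt (real (card B))"
  by (simp add: card_mono)

lemma E_bound:
  fixes p :: nat and \<alpha> \<beta> s0 Kr :: real
  assumes pr: "prime p" "p mod 4 = 1"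
    and b: "0 < \<beta>" "\<beta> \<le> 1"
    and s0: "s0 > 0" "s0 \<ge> real p powr \<alpha>"
    and DH: "\<And>A. A \<subseteq> {0..<p} \<Longrightarrow> real (card A) > real p powr \<alpha> \<Longrightarrow> \<bar>Ep p A A\<bar> < real (card A) powr (2 - \<beta>)"
    and Kr: "Kr \<ge> 0"
    and A: "A \<subseteq> {0..<p}" "real (card A) \<le> Kr"
    and B: "B \<subseteq> {0..<p}" "real (card B) \<le> Kr"
  shows "\<bar>Ep p A B\<bar> \<le> 3 * (s0 + sqrt (s0 * Kr) + Kr powr (1 - \<beta>) + 6 * Kr powr (2 - \<beta>) / s0)
            * sqrt (real (card A)) * sqrt (real (card B))"
proof -
  define \<rho> where "\<rho> = s0 + sqrt (s0 * Kr) + Kr powr (1 - \<beta>) + 6 * Kr powr (2 - \<beta>) / s0"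
  have t1: "s0 \<le> \<rho>" and t2: "sqrt (s0 * Kr) \<le> \<rho>" and t3: "Kr powr (1 - \<beta>) \<le> \<rho>" and t4: "6 * Kr powr (2 - \<beta>) / s0 \<le> \<rho>"
    unfolding \<rho>_def using s0 Kr by (auto intro!: add_nonneg_nonneg divide_nonneg_pos)
  have \<rho>0: "\<rho> \<ge> 0" using t1 s0 by simp
  have DH': "\<bar>Ep p X X\<bar> < real (card X) powr (2 - \<beta>)" if "X \<subseteq> {0..<p}" "real (card X) > s0" for X
    using DH[OF that(1)] that(2) s0(2) by simp
  have finS: "finite X" if "X \<subseteq> {0..<p}" for X :: "nat set" using that finite_subset by blast
  have diag: "\<bar>Ep p X X\<bar> \<le> \<rho> * real (card X)" if X: "X \<subseteq> {0..<p}" "real (card X) \<le> Kr" for X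
  proof (cases "real (card X) \<le> s0")
    case True
    have "\<bar>Ep p X X\<bar> \<le> real (card X) * real (card X)" using Ep_triv finS[OF X(1)] by blast
    also have "\<dots> \<le> s0 * real (card X)" using True by (intro mult_right_mono) auto
    also have "\<dots> \<le> \<rho> * real (card X)" using t1 by (intro mult_right_mono) auto
    finally show ?thesis .
  next
    case False
    then have cpos: "real (card X) > 0" using s0 by linarith
    have "\<bar>Ep p X X\<bar> < real (card X) powr (2 - \<beta>)" using DH' X False by simp
    also have "real (card X) powr (2 - \<beta>) = real (card X) powr 1 * real (card X) powr (1 - \<beta>)"
    proof -
      have "real (card X) powr (1 + (1 - \<beta>)) = real (card X) powr 1 * real (card X) powr (1 - \<beta>)"
        by (rule powr_add)
      then show ?thesis by simp
    qed
    also have "\<dots> \<le> real (card X) * Kr powr (1 - \<beta>)"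
      using cpos X(2) b by (simp add: powr_mono2)
    also have "\<dots> \<le> real (card X) * \<rho>" using t3 cpos by (intro mult_left_mono) auto
    finally show ?thesis by (simp add: mult.commute)
  qed
  have disj: "\<bar>Ep p X Y\<bar> \<le> \<rho> * sqrt (real (card X)) * sqrt (real (card Y))"
    if X: "X \<subseteq> {0..<p}" "real (card X) \<le> Kr" and Y: "Y \<subseteq> {0..<p}" "real (card Y) \<le> Kr"
      and XY: "X \<inter> Y = {}" for X Y
  proof (cases "real (card X) \<le> s0 \<or> real (card Y) \<le> s0")
    case True
    have prod: "real (card X) * real (card Y) \<le> s0 * Kr"
    proof (cases "real (card X) \<le> s0")
      case True
      then show ?thesis using mult_mono[of "real (card X)" s0 "real (card Y)" Kr] Y(2) s0 by auto
    next
      case False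
      then have "real (card Y) \<le> s0" using \<open>real (card X) \<le> s0 \<or> real (card Y) \<le> s0\<close> by auto
      then show ?thesis using mult_mono[of "real (card X)" Kr "real (card Y)" s0] X(2) Kr by (auto simp: mult.commute)
    qed
    have "\<bar>Ep p X Y\<bar> \<le> real (card X) * real (card Y)" using Ep_triv finS[OF X(1)] finS[OF Y(1)] by blast
    also have "\<dots> = sqrt (real (card X) * real (card Y)) * sqrt (real (card X) * real (card Y))" by simp
    also have "\<dots> \<le> sqrt (s0 * Kr) * sqrt (real (card X) * real (card Y))"
      using prod by (intro mult_right_mono real_sqrt_le_mono) auto
    also have "\<dots> \<le> \<rho> * sqrt (real (card X) * real (card Y))" using t2 by (intro mult_right_mono) auto
    finally show ?thesis by (simp add: real_sqrt_mult mult.assoc)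
  next
    case False
    then have cx: "real (card X) > s0" and cy: "real (card Y) > s0" by auto
    have fX: "finite X" and fY: "finite Y" using finS X(1) Y(1) by auto
    have cU: "card (X \<union> Y) = card X + card Y" using card_Un_disjoint[OF fX fY XY] .
    have U: "X \<union> Y \<subseteq> {0..<p}" using X Y by auto
    have "Ep p (X \<union> Y) (X \<union> Y) = Ep p X (X \<union> Y) + Ep p Y (X \<union> Y)" using Ep_union1[OF fX fY XY] .
    also have "\<dots> = Ep p X X + Ep p X Y + Ep p Y X + Ep p Y Y"
      using Ep_union2[OF fX fY XY, of p X] Ep_union2[OF fX fY XY, of p Y] by simp
    also have "Ep p Y X = Ep p X Y" using Ep_sym[OF pr] by simp
    finally have eqU: "2 * Ep p X Y = Ep p (X \<union> Y) (X \<union> Y) - Ep p X X - Ep p Y Y" by simp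
    have bnd: "\<bar>Ep p Z Z\<bar> \<le> 4 * Kr powr (2 - \<beta>)" if "Z \<subseteq> {0..<p}" "real (card Z) > s0" "real (card Z) \<le> 2 * Kr" for Z
    proof -
      have "\<bar>Ep p Z Z\<bar> < real (card Z) powr (2 - \<beta>)" using DH' that by simp
      also have "\<dots> \<le> (2 * Kr) powr (2 - \<beta>)" using that b s0 by (intro powr_mono2) auto
      also have "\<dots> = 2 powr (2 - \<beta>) * Kr powr (2 - \<beta>)" using Kr by (simp add: powr_mult)
      also have "\<dots> \<le> 2 powr 2 * Kr powr (2 - \<beta>)" using b by (intro mult_right_mono powr_mono) auto
      finally show ?thesis by simp
    qed
    have "\<bar>2 * Ep p X Y\<bar> \<le> \<bar>Ep p (X \<union> Y) (X \<union> Y)\<bar> + \<bar>Ep p X X\<bar> + \<bar>Ep p Y Y\<bar>" unfolding eqU by linarith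
    also have "\<dots> \<le> 4 * Kr powr (2 - \<beta>) + 4 * Kr powr (2 - \<beta>) + 4 * Kr powr (2 - \<beta>)"
    proof (intro add_mono bnd)
      show "X \<union> Y \<subseteq> {0..<p}" "X \<subseteq> {0..<p}" "Y \<subseteq> {0..<p}" using U X Y by auto
      show "s0 < real (card (X \<union> Y))" using cU cx by simp
      show "real (card (X \<union> Y)) \<le> 2 * Kr" using cU X(2) Y(2) by simp
      show "s0 < real (card X)" "s0 < real (card Y)" by fact+
      show "real (card X) \<le> 2 * Kr" "real (card Y) \<le> 2 * Kr" using X(2) Y(2) Kr by auto
    qed
    finally have e6: "\<bar>Ep p X Y\<bar> \<le> 6 * Kr powr (2 - \<beta>)" by simp
    have "s0 \<le> sqrt (real (card X)) * sqrt (real (card Y))"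
    proof -
      have "s0 * s0 \<le> real (card X) * real (card Y)" using cx cy s0 by (intro mult_mono) auto
      then have "sqrt (s0 * s0) \<le> sqrt (real (card X) * real (card Y))" by (rule real_sqrt_le_mono)
      then show ?thesis using s0 by (simp add: real_sqrt_mult)
    qed
    then have "s0 * (6 * Kr powr (2 - \<beta>)) \<le> (sqrt (real (card X)) * sqrt (real (card Y))) * (6 * Kr powr (2 - \<beta>))"
      by (intro mult_right_mono) auto
    then have "6 * Kr powr (2 - \<beta>) \<le> 6 * Kr powr (2 - \<beta>) / s0 * (sqrt (real (card X)) * sqrt (real (card Y)))"
      using s0 by (simp add: field_simps)
    also have "\<dots> \<le> \<rho> * (sqrt (real (card X)) * sqrt (real (card Y)))" using t4 by (intro mult_right_mono) auto
    finally show ?thesis using e6 by (simp add: mult.assoc)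
  qed
  have fA: "finite A" and fB: "finite B" using finS A(1) B(1) by auto
  let ?I = "A \<inter> B"
  have cI: "real (card ?I) \<le> Kr" using A(2) card_mono[OF fA, of ?I] by auto
  have cBA: "real (card (B - A)) \<le> Kr" using B(2) card_mono[OF fB, of "B - A"] by auto
  have cAB: "real (card (A - B)) \<le> Kr" using A(2) card_mono[OF fA, of "A - B"] by auto
  have sI: "sqrt (real (card ?I)) \<le> sqrt (real (card A))" "sqrt (real (card ?I)) \<le> sqrt (real (card B))"
    using sqrt_card_mono[OF fA, of ?I] sqrt_card_mono[OF fB, of ?I] by auto
  have sBA: "sqrt (real (card (B - A))) \<le> sqrt (real (card B))" using sqrt_card_mono[OF fB, of "B - A"] by auto
  have sAB: "sqrt (real (card (A - B))) \<le> sqrt (real (card A))" using sqrt_card_mono[OF fA, of "A - B"] by auto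
  have "\<bar>Ep p A B\<bar> \<le> \<bar>Ep p ?I ?I\<bar> + \<bar>Ep p ?I (B - A)\<bar> + \<bar>Ep p (A - B) B\<bar>"
    unfolding Ep_decomp[OF fA fB] by linarith
  also have "\<dots> \<le> \<rho> * (sqrt (real (card ?I)) * sqrt (real (card ?I)))
      + \<rho> * sqrt (real (card ?I)) * sqrt (real (card (B - A)))
      + \<rho> * sqrt (real (card (A - B))) * sqrt (real (card B))"
  proof (intro add_mono)
    show "\<bar>Ep p ?I ?I\<bar> \<le> \<rho> * (sqrt (real (card ?I)) * sqrt (real (card ?I)))"
      using diag[of ?I] A(1) cI by auto
    show "\<bar>Ep p ?I (B - A)\<bar> \<le> \<rho> * sqrt (real (card ?I)) * sqrt (real (card (B - A)))"
      using A(1) B(1) cI cBA by (intro disj) auto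
    show "\<bar>Ep p (A - B) B\<bar> \<le> \<rho> * sqrt (real (card (A - B))) * sqrt (real (card B))"
      using A(1) B(1) cAB B(2) by (intro disj) auto
  qed
  also have "\<dots> \<le> \<rho> * (sqrt (real (card A)) * sqrt (real (card B)))
      + \<rho> * sqrt (real (card A)) * sqrt (real (card B))
      + \<rho> * sqrt (real (card A)) * sqrt (real (card B))"
    using sI sBA sAB \<rho>0 by (intro add_mono mult_left_mono mult_mono) auto
  finally show ?thesis unfolding \<rho>_def by (simp add: algebra_simps)
qed


lemma asym:
  fixes a c C :: real
  assumes "a < c" "C > 0"
  shows "\<exists>P\<ge>1. \<forall>x\<ge>P. C * x powr a * (1 + ln x) \<le> x powr c"
proof -
  define e where "e = (c - a) / 2"
  have e0: "e > 0" using assms unfolding e_def by simp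
  define D where "D = C * (1 + 1 / e)"
  have D0: "D > 0" using assms e0 unfolding D_def by (simp add: add_pos_pos)
  define P where "P = max 1 (D powr (1 / e))"
  show ?thesis
  proof (intro exI[of _ P] conjI allI impI)
    show "1 \<le> P" unfolding P_def by simp
    fix x :: real assume x: "P \<le> x"
    then have x1: "x \<ge> 1" unfolding P_def by simp
    then have xp: "x > 0" by simp
    have xe1: "x powr e \<ge> 1" using x1 e0 by (simp add: ge_one_powr_ge_zero)
    have "ln x \<le> x powr e / e" using ln_powr_bound[OF x1 e0] .
    then have "1 + ln x \<le> x powr e + x powr e / e" using xe1 by linarith
    also have "\<dots> = (1 + 1 / e) * x powr e" by (simp add: field_simps)
    finally have l: "1 + ln x \<le> (1 + 1 / e) * x powr e" .
    have "D \<le> x powr e"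
    proof -
      have "D = (D powr (1 / e)) powr e" using D0 e0 by (simp add: powr_powr)
      also have "\<dots> \<le> x powr e" using x e0 D0 unfolding P_def by (intro powr_mono2) auto
      finally show ?thesis .
    qed
    have "C * x powr a * (1 + ln x) \<le> C * x powr a * ((1 + 1 / e) * x powr e)"
      using l assms(2) by (intro mult_left_mono) auto
    also have "\<dots> = D * (x powr a * x powr e)" unfolding D_def by (simp add: algebra_simps)
    also have "\<dots> \<le> x powr e * (x powr a * x powr e)"
      using \<open>D \<le> x powr e\<close> by (intro mult_right_mono) auto
    also have "\<dots> = x powr (e + a + e)" by (simp only: powr_add mult.assoc mult.commute)
    also have "e + a + e = c" unfolding e_def by simp
    finally show "C * x powr a * (1 + ln x) \<le> x powr c" .
  qed
qed

lemma asym2: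
  fixes a c :: real
  assumes "a < c" "0 < c"
  shows "\<exists>P\<ge>1. \<forall>x\<ge>P. x powr a + 1 \<le> x powr c"
proof -
  define a' where "a' = max a 0"
  have "a' < c" using assms unfolding a'_def by simp
  from asym[OF this, of 2] obtain P where P: "P \<ge> 1" "\<forall>x\<ge>P. 2 * x powr a' * (1 + ln x) \<le> x powr c" by auto
  show ?thesis
  proof (intro exI[of _ P] conjI allI impI)
    show "1 \<le> P" by fact
    fix x :: real assume x: "P \<le> x"
    then have x1: "x \<ge> 1" using P by simp
    have "x powr a \<le> x powr a'" using x1 unfolding a'_def by (intro powr_mono) auto
    moreover have "1 \<le> x powr a'" using x1 unfolding a'_def by (simp add: ge_one_powr_ge_zero)
    moreover have "0 \<le> ln x" using x1 by simp
    ultimately have "x powr a + 1 \<le> 2 * x powr a' * (1 + ln x)"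
      by (smt (verit, best) mult_left_mono mult_cancel_left1 ge_one_powr_ge_zero)
    also have "\<dots> \<le> x powr c" using P x by simp
    finally show "x powr a + 1 \<le> x powr c" .
  qed
qed

lemma harm_le_ln: "n > 0 \<Longrightarrow> (harm n :: real) \<le> 1 + ln (real n)"
  using euler_mascheroni_sequence_decreasing[of 1 n] by (simp add: harm_def)


lemma rho_bound:
  fixes x a g b t :: real
  assumes x: "x \<ge> 1" and e1: "a \<le> t" and e2: "(a + g) / 2 \<le> t" and e3: "g * (1 - b) \<le> t"
    and e4: "g * (2 - b) - a \<le> t" and e5: "g / 2 \<le> t" and hm: "h \<le> 1 + ln x" and h0: "h \<ge> 0"
  shows "2 * (3 * (x powr a + sqrt (x powr a * x powr g) + (x powr g) powr (1 - b) + 6 * (x powr g) powr (2 - b) / x powr a)) * h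
         + sqrt (x powr g) \<le> 55 * x powr t * (1 + ln x)"
proof -
  have x0: "x > 0" using x by simp
  have l0: "0 \<le> ln x" using x by simp
  have m: "\<And>e. e \<le> t \<Longrightarrow> x powr e \<le> x powr t" using x by (intro powr_mono) auto
  have q1: "sqrt (x powr a * x powr g) = x powr ((a + g) / 2)"
    using x0 by (simp add: powr_add[symmetric] powr_half_sqrt_powr)
  have q2: "(x powr g) powr (1 - b) = x powr (g * (1 - b))" by (simp add: powr_powr)
  have q3: "(x powr g) powr (2 - b) / x powr a = x powr (g * (2 - b) - a)"
    by (simp only: powr_powr powr_diff[of x "g * (2 - b)" a])
  have q3': "6 * (x powr g) powr (2 - b) / x powr a = 6 * x powr (g * (2 - b) - a)"
    using q3 by (simp add: times_divide_eq_right[symmetric])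
  have q4: "sqrt (x powr g) = x powr (g / 2)" using x0 by (simp add: powr_half_sqrt_powr)
  define R where "R = x powr a + sqrt (x powr a * x powr g) + (x powr g) powr (1 - b) + 6 * (x powr g) powr (2 - b) / x powr a"
  have R: "R \<le> 9 * x powr t"
    unfolding R_def q1 q2 q3' using m[OF e1] m[OF e2] m[OF e3] m[OF e4] by linarith
  have R0: "R \<ge> 0" unfolding R_def by (intro add_nonneg_nonneg) auto
  have xt0: "x powr t \<ge> 0" by simp
  have "R * h \<le> (9 * x powr t) * (1 + ln x)"
    by (rule mult_mono[OF R hm]) (use xt0 h0 in auto)
  then have "2 * (3 * R) * h \<le> 6 * (9 * x powr t) * (1 + ln x)" by simp
  moreover have "sqrt (x powr g) \<le> x powr t * (1 + ln x)"
  proof -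
    have "sqrt (x powr g) \<le> x powr t" unfolding q4 using m[OF e5] .
    also have "\<dots> \<le> x powr t * (1 + ln x)" using l0 xt0 by (simp add: mult_le_cancel_left1)
    finally show ?thesis .
  qed
  ultimately have "2 * (3 * R) * h + sqrt (x powr g) \<le> 54 * x powr t * (1 + ln x) + x powr t * (1 + ln x)"
    by simp
  then show ?thesis unfolding R_def by simp
qed


lemma Ep_int:
  "real_of_int (\<Sum>a\<in>int ` A. \<Sum>b\<in>int ` A. chi p (a - b)) = Ep p A A"
proof -
  have "(\<Sum>a\<in>int ` A. \<Sum>b\<in>int ` A. chi p (a - b)) = (\<Sum>a\<in>A. \<Sum>b\<in>int ` A. chi p (int a - b))"
    by (simp add: sum.reindex)
  also have "\<dots> = (\<Sum>a\<in>A. \<Sum>b\<in>A. chi p (int a - int b))"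
    by (simp add: sum.reindex)
  finally show ?thesis unfolding Ep_def by simp
qed

theorem part1:
  assumes "\<exists>\<alpha> \<beta>. 0 < \<alpha> \<and> \<alpha> < 1/2 \<and> 0 < \<beta> \<and> \<beta> < 2 \<and> PaleyDiscrepancy \<alpha> \<beta>"
  shows "\<exists>\<gamma> \<tau>. \<gamma> > 1/2 \<and> \<tau> < 1/2 \<and> (\<forall>\<epsilon>>0. PaleyRIP \<gamma> (\<tau> - 1/2 + \<epsilon>))"
proof -
  obtain \<alpha> \<beta> where ab: "0 < \<alpha>" "\<alpha> < 1/2" "0 < \<beta>" "\<beta> < 2" and PD: "PaleyDiscrepancy \<alpha> \<beta>"
    using assms by blast
  obtain P0 where P0: "\<forall>p::nat. prime p \<and> p mod 4 = 1 \<and> p \<ge> P0 \<longrightarrow>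
        (\<forall>S. S \<subseteq> {0..<int p} \<and> real (card S) > real p powr \<alpha> \<longrightarrow>
           \<bar>real_of_int (\<Sum>a\<in>S. \<Sum>b\<in>S. chi p (a - b))\<bar> < real (card S) powr (2 - \<beta>))"
    using PD unfolding PaleyDiscrepancy_def by blast
  define b where "b = min \<beta> 1"
  have b: "0 < b" "b \<le> 1" "b \<le> \<beta>" unfolding b_def using ab by auto
  define \<eta> where "\<eta> = min (1/2 - \<alpha>) (b / (2 * (3 - b))) / 2"
  have \<eta>0: "\<eta> > 0" unfolding \<eta>_def using ab b by (simp add: divide_pos_pos)
  define mn where "mn = min (1/2 - \<alpha>) (b / (2 * (3 - b)))"
  have mm: "mn \<le> 1/2 - \<alpha>" unfolding mn_def by (rule min.cobounded1)
  have em: "\<eta> = mn / 2" unfolding \<eta>_def mn_def ..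
  have \<eta>a: "\<eta> < 1/2 - \<alpha>" unfolding em using ab mm by linarith
  have mm2: "mn \<le> b / (2 * (3 - b))" unfolding mn_def by (rule min.cobounded2)
  have "\<eta> \<le> b / (2 * (3 - b)) / 2" unfolding em using mm2 by (rule divide_right_mono) simp
  then have "\<eta> * (3 - b) \<le> b / (2 * (3 - b)) / 2 * (3 - b)" using b by (intro mult_right_mono) auto
  also have "\<dots> = b / 4" using b by (simp add: field_simps)
  finally have k3le: "\<eta> * (3 - b) \<le> b / 4" .
  have "\<eta> * (1 - b) \<le> \<eta> * (3 - b)" using \<eta>0 by (intro mult_left_mono) auto
  define k1 where "k1 = \<eta> * (1 - b)"
  define k3 where "k3 = \<eta> * (3 - b)"
  have k3: "k3 < b / 2" using k3le b unfolding k3_def by linarith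
  have k1: "k1 < b / 2" using \<open>\<eta> * (1 - b) \<le> \<eta> * (3 - b)\<close> k3 unfolding k1_def k3_def by linarith
  define \<gamma> where "\<gamma> = 1/2 + \<eta>"
  have g1': "\<gamma> * (1 - b) = (1 - b) / 2 + k1" unfolding \<gamma>_def k1_def by (simp add: algebra_simps)
  define G1 where "G1 = \<gamma> * (1 - b)"
  have g1: "G1 = (1 - b) / 2 + k1" unfolding G1_def by (rule g1')
  have g2': "\<gamma> * (2 - b) = (2 - b) / 2 + k3 - \<eta>" unfolding \<gamma>_def k3_def by (simp add: algebra_simps)
  define G2 where "G2 = \<gamma> * (2 - b)"
  have g2: "G2 = (2 - b) / 2 + k3 - \<eta>" unfolding G2_def by (rule g2')
  define L where "L = max \<alpha> (\<gamma> * (2 - b) - 1/2)"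
  define U where "U = 1 - \<gamma>"
  have \<gamma>e: "\<gamma> = 1/2 + \<eta>" by (simp add: \<gamma>_def)
  have LU1: "\<alpha> < U" unfolding U_def using \<gamma>e \<eta>a by linarith
  have LU2: "\<gamma> * (2 - b) - 1/2 < U" unfolding U_def G2_def[symmetric] using g2 k3 \<gamma>e by (simp add: field_simps)
  have LU: "L < U" unfolding L_def using LU1 LU2 by simp
  define \<alpha>' where "\<alpha>' = (L + U) / 2"
  have a1: "L < \<alpha>'" "\<alpha>' < U" using LU unfolding \<alpha>'_def by auto
  have aa': "\<alpha> \<le> \<alpha>'" using a1 unfolding L_def by auto
  define t0 where "t0 = max (max \<alpha>' ((\<alpha>' + \<gamma>) / 2)) (max (max (\<gamma> * (1 - b)) (\<gamma> * (2 - b) - \<alpha>')) (\<gamma> / 2))"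
  have t0: "t0 < 1/2"
  proof -
    have "\<alpha>' < 1/2" using a1 \<eta>0 unfolding U_def \<gamma>_def by linarith
    moreover have "(\<alpha>' + \<gamma>) / 2 < 1/2" using a1 unfolding U_def by (simp add: field_simps)
    moreover have "\<gamma> * (1 - b) < 1/2" unfolding G1_def[symmetric] using g1 k1 by (simp add: field_simps)
    moreover have "\<gamma> * (2 - b) - \<alpha>' < 1/2"
    proof -
      have "G2 - 1/2 \<le> L" unfolding L_def G2_def by simp
      then show ?thesis using a1 unfolding G2_def[symmetric] by simp
    qed
    moreover have "\<gamma> / 2 < 1/2" using \<eta>a ab unfolding \<gamma>_def by (simp add: field_simps)
    ultimately show ?thesis unfolding t0_def max_less_iff_conj by blast
  qed
  define \<tau> where "\<tau> = (t0 + 1/2) / 2"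
  have \<tau>: "\<tau> < 1/2" "t0 < \<tau>" using t0 unfolding \<tau>_def by auto
  have \<gamma>: "\<gamma> > 1/2" unfolding \<gamma>_def using \<eta>0 by simp
  have RIPall: "PaleyRIP \<gamma> (\<tau> - 1/2 + \<epsilon>)" if \<epsilon>: "\<epsilon> > 0" for \<epsilon>
  proof -
    have "t0 < \<tau> + \<epsilon>" using \<tau> \<epsilon> by simp
    from asym[OF this, of 55] obtain P1 where P1: "P1 \<ge> 1" "\<forall>x\<ge>P1. 55 * x powr t0 * (1 + ln x) \<le> x powr (\<tau> + \<epsilon>)"
      by auto
    show ?thesis unfolding PaleyRIP_def
    proof (intro exI[of _ "max P0 (nat \<lceil>P1\<rceil>)"] allI impI)
      fix p :: nat assume pp: "prime p \<and> p mod 4 = 1 \<and> max P0 (nat \<lceil>P1\<rceil>) \<le> p"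
      then have pr: "prime p" "p mod 4 = 1" and pP0: "p \<ge> P0" and pP1: "real p \<ge> P1" by auto
      have p2: "2 < p" using p_gt2[OF pr] .
      have x1: "real p \<ge> 1" using p2 by simp
      define s0 where "s0 = real p powr \<alpha>'"
      define Kr where "Kr = real p powr \<gamma>"
      define \<rho>0 where "\<rho>0 = s0 + sqrt (s0 * Kr) + Kr powr (1 - b) + 6 * Kr powr (2 - b) / s0"
      have s0: "s0 > 0" "s0 \<ge> real p powr \<alpha>" unfolding s0_def using p2 aa' x1 by (auto intro: powr_mono)
      have Kr: "Kr \<ge> 0" unfolding Kr_def by simp
      have \<rho>0: "\<rho>0 \<ge> 0" unfolding \<rho>0_def using s0 Kr by (intro add_nonneg_nonneg divide_nonneg_pos) auto
      have DH: "\<bar>Ep p A A\<bar> < real (card A) powr (2 - b)" if A: "A \<subseteq> {0..<p}" "real (card A) > real p powr \<alpha>" for A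
      proof -
        have inner: "\<And>S. S \<subseteq> {0..<int p} \<Longrightarrow> real (card S) > real p powr \<alpha> \<Longrightarrow>
           \<bar>real_of_int (\<Sum>a\<in>S. \<Sum>b\<in>S. chi p (a - b))\<bar> < real (card S) powr (2 - \<beta>)"
          using P0 pr pP0 by blast
        have h1: "int ` A \<subseteq> {0..<int p}" using A(1) by auto
        have h2: "card (int ` A) = card A" by (simp add: card_image)
        have "\<bar>real_of_int (\<Sum>a\<in>int ` A. \<Sum>b\<in>int ` A. chi p (a - b))\<bar> < real (card (int ` A)) powr (2 - \<beta>)"
          using inner[OF h1] A(2) unfolding h2 by blast
        then have "\<bar>real_of_int (\<Sum>a\<in>int ` A. \<Sum>b\<in>int ` A. chi p (a - b))\<bar> < real (card A) powr (2 - \<beta>)"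
          unfolding h2 .
        then have "\<bar>Ep p A A\<bar> < real (card A) powr (2 - \<beta>)" unfolding Ep_int .
        also have "\<dots> \<le> real (card A) powr (2 - b)"
        proof -
          have "real (card A) > 0" using A(2) by (smt (verit) powr_ge_zero)
          then have "real (card A) \<ge> 1" by simp
          then show ?thesis using b by (intro powr_mono) auto
        qed
        finally show ?thesis .
      qed
      show "RIP (paley_matrix p) ((p + 1) div 2) (p + 1) (real p powr \<gamma>) (real p powr (\<tau> - 1 / 2 + \<epsilon>))"
        unfolding Kr_def[symmetric]
      proof (rule rip_from_E[OF pr(1) p2 Kr, of "3 * \<rho>0"])
        show "0 \<le> 3 * \<rho>0" using \<rho>0 by simp
        fix A B assume A: "A \<subseteq> {0..<p}" and B: "B \<subseteq> {0..<p}" and cA: "real (card A) \<le> Kr" and cB: "real (card B) \<le> Kr"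
        show "\<bar>\<Sum>a\<in>A. \<Sum>b\<in>B. real_of_int (chi p (int a - int b))\<bar> \<le> 3 * \<rho>0 * sqrt (real (card A)) * sqrt (real (card B))"
          using E_bound[OF pr b(1,2) s0 DH Kr A cA B cB] unfolding Ep_def \<rho>0_def by simp
      next
        have hm: "harm p \<le> 1 + ln (real p)" using harm_le_ln[of p] p2 by simp
        have "2 * (3 * \<rho>0) * harm p + sqrt Kr \<le> 55 * real p powr t0 * (1 + ln (real p))"
          unfolding \<rho>0_def s0_def Kr_def
        proof (rule rho_bound[OF x1 _ _ _ _ _ hm harm_nonneg])
          show "\<alpha>' \<le> t0" "(\<alpha>' + \<gamma>) / 2 \<le> t0" "\<gamma> * (1 - b) \<le> t0" "\<gamma> * (2 - b) - \<alpha>' \<le> t0" "\<gamma> / 2 \<le> t0"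
            unfolding t0_def by (simp_all only: le_max_iff_disj order_refl simp_thms)
        qed
        also have "\<dots> \<le> real p powr (\<tau> + \<epsilon>)" using P1 pP1 by blast
        finally have le: "2 * (3 * \<rho>0) * harm p + sqrt Kr \<le> real p powr (\<tau> + \<epsilon>)" .
        have sp: "sqrt (real p) > 0" using p2 by simp
        have "(2 * (3 * \<rho>0) * harm p + sqrt Kr) / sqrt (real p) \<le> real p powr (\<tau> + \<epsilon>) / sqrt (real p)"
          using le sp by (intro divide_right_mono) auto
        also have "\<dots> = real p powr (\<tau> - 1/2 + \<epsilon>)"
        proof -
          have "real p powr (\<tau> + \<epsilon> - 1/2) = real p powr (\<tau> + \<epsilon>) / real p powr (1/2)" by (rule powr_diff)
          then show ?thesis using x1 by (simp add: powr_half_sqrt algebra_simps)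
        qed
        finally show "(2 * (3 * \<rho>0) * harm p + sqrt Kr) / sqrt (real p) \<le> real p powr (\<tau> - 1/2 + \<epsilon>)" .
      qed
    qed
  qed
  show ?thesis using \<gamma> \<tau> RIPall by blast
qed


lemma sum_ind:
  assumes "finite A" "N \<subseteq> A"
  shows "(\<Sum>k\<in>A. if k \<in> N then f k else 0) = (\<Sum>k\<in>N. f k)"
proof -
  have "(\<Sum>k\<in>A. if k \<in> N then f k else 0) = (\<Sum>k\<in>N. if k \<in> N then f k else 0)"
    by (rule sum.mono_neutral_right[OF assms]) auto
  then show ?thesis by simp
qed

lemma clique_Q:
  assumes "prime p" "N \<subseteq> {0..<p}" "\<And>a b. a \<in> N \<Longrightarrow> b \<in> N \<Longrightarrow> a \<noteq> b \<Longrightarrow> chi p (int a - int b) = 1"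
  shows "Qf p (\<lambda>j. if j \<in> N then 1 else 0) = real (card N) * (real (card N) - 1)"
proof -
  have fN: "finite N" using assms(2) finite_subset by blast
  let ?x = "\<lambda>j::nat. if j \<in> N then (1::real) else 0"
  have "Qf p ?x = (\<Sum>j<p. \<Sum>k<p. ?x j * ?x k * real_of_int (chi p (int j - int k)))" unfolding Qf_def ..
  also have "\<dots> = (\<Sum>j\<in>N. \<Sum>k\<in>N. real_of_int (chi p (int j - int k)))"
  proof -
    have sN: "N \<subseteq> {..<p}" using assms(2) by auto
    have "(\<Sum>j<p. \<Sum>k<p. ?x j * ?x k * real_of_int (chi p (int j - int k)))
        = (\<Sum>j<p. if j \<in> N then (\<Sum>k<p. if k \<in> N then real_of_int (chi p (int j - int k)) else 0) else 0)"
      by (intro sum.cong refl, rename_tac j, case_tac "j \<in> N") (auto intro!: sum.cong)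
    also have "\<dots> = (\<Sum>j<p. if j \<in> N then (\<Sum>k\<in>N. real_of_int (chi p (int j - int k))) else 0)"
      by (simp add: sum_ind[OF _ sN] cong: if_cong)
    also have "\<dots> = (\<Sum>j\<in>N. \<Sum>k\<in>N. real_of_int (chi p (int j - int k)))"
      using sum_ind[OF _ sN] by simp
    finally show ?thesis .
  qed
  also have "\<dots> = (\<Sum>j\<in>N. real (card N) - 1)"
  proof (rule sum.cong[OF refl])
    fix j assume j: "j \<in> N"
    have "(\<Sum>k\<in>N. real_of_int (chi p (int j - int k))) = real_of_int (chi p (int j - int j)) + (\<Sum>k\<in>N - {j}. real_of_int (chi p (int j - int k)))"
      using j fN by (simp add: sum.remove)
    also have "real_of_int (chi p (int j - int j)) = 0" by (simp add: chi_def Leg_0)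
    also have "(\<Sum>k\<in>N - {j}. real_of_int (chi p (int j - int k))) = (\<Sum>k\<in>N - {j}. 1)"
      using assms(3) j by (intro sum.cong refl) auto
    also have "\<dots> = real (card N) - 1"
    proof -
      have "card N > 0" using j fN card_gt_0_iff by blast
      then show ?thesis using j fN by (simp add: card_Diff_singleton of_nat_diff)
    qed
    finally show "(\<Sum>k\<in>N. real_of_int (chi p (int j - int k))) = real (card N) - 1" by simp
  qed
  also have "\<dots> = real (card N) * (real (card N) - 1)" by simp
  finally show ?thesis .
qed

theorem part2:
  assumes "\<exists>\<gamma> \<tau>. \<gamma> > 1/2 \<and> \<tau> < 1/2 \<and> (\<forall>\<epsilon>>0. PaleyRIP \<gamma> (\<tau> - 1/2 + \<epsilon>))"
  shows "\<exists>\<tau>. \<tau> < 1/2 \<and> (\<forall>\<epsilon>>0. PaleyClique (\<tau> + \<epsilon>))"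
proof -
  obtain \<gamma> \<tau> where g: "\<gamma> > 1/2" and t: "\<tau> < 1/2" and R: "\<forall>\<epsilon>>0. PaleyRIP \<gamma> (\<tau> - 1/2 + \<epsilon>)"
    using assms by blast
  define \<tau>' where "\<tau>' = max \<tau> 0"
  have t': "\<tau>' < 1/2" "\<tau> \<le> \<tau>'" "0 \<le> \<tau>'" unfolding \<tau>'_def using t by auto
  have cl: "PaleyClique (\<tau>' + \<epsilon>)" if e: "\<epsilon> > 0" for \<epsilon>
  proof -
    define e1 where "e1 = min \<epsilon> (\<gamma> - \<tau>') / 2"
    have e1: "e1 > 0" "e1 < \<epsilon>" "e1 < \<gamma> - \<tau>'" unfolding e1_def using e t' g by (auto simp: min_def)
    define b where "b = \<tau>' + e1"
    define e2 where "e2 = e1 / 2"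
    have b: "0 < b" "b < \<gamma>" "b \<le> \<tau>' + \<epsilon>" "\<tau> + e2 < b" unfolding b_def e2_def using e1 t' by auto
    obtain P1 where P1: "\<forall>p::nat. prime p \<and> p mod 4 = 1 \<and> p \<ge> P1 \<longrightarrow>
        RIP (paley_matrix p) ((p + 1) div 2) (p + 1) (real p powr \<gamma>) (real p powr (\<tau> - 1/2 + e2))"
      using R e1 unfolding PaleyRIP_def e2_def by (metis half_gt_zero)
    obtain Pa where Pa: "Pa \<ge> 1" "\<forall>x\<ge>Pa. x powr b + 1 \<le> x powr \<gamma>" using asym2[OF b(2)] g by auto
    obtain Pb where Pb: "Pb \<ge> 1" "\<forall>x\<ge>Pb. x powr (\<tau> + e2) + 1 \<le> x powr b" using asym2[OF b(4) b(1)] by auto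
    show ?thesis unfolding PaleyClique_def
    proof (intro exI[of _ "max P1 (max (nat \<lceil>Pa\<rceil>) (nat \<lceil>Pb\<rceil>))"] allI impI)
      fix p :: nat and S :: "int set"
      assume pp: "prime p \<and> p mod 4 = 1 \<and> max P1 (max (nat \<lceil>Pa\<rceil>) (nat \<lceil>Pb\<rceil>)) \<le> p"
      then have pr: "prime p" "p mod 4 = 1" and pP1: "p \<ge> P1" and pPa: "real p \<ge> Pa" and pPb: "real p \<ge> Pb"
        by auto
      assume clq: "paley_clique p S"
      have p2: "2 < p" using p_gt2[OF pr] .
      have x1: "real p \<ge> 1" using p2 by simp
      have Ssub: "S \<subseteq> {0..<int p}" and Scl: "\<And>a b. a \<in> S \<Longrightarrow> b \<in> S \<Longrightarrow> a \<noteq> b \<Longrightarrow> chi p (a - b) = 1"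
        using clq unfolding paley_clique_def by auto
      define Sn where "Sn = {j::nat. int j \<in> S}"
      have SnS: "int ` Sn = S" unfolding Sn_def using Ssub by (auto intro!: image_eqI[where x = "nat _"])
      have cSn: "card Sn = card S" using SnS card_image[of int Sn] by simp
      have Snsub: "Sn \<subseteq> {0..<p}" unfolding Sn_def using Ssub by auto
      show "real (card S) \<le> real p powr (\<tau>' + \<epsilon>)"
      proof (rule ccontr)
        assume "\<not> real (card S) \<le> real p powr (\<tau>' + \<epsilon>)"
        then have big: "real (card S) > real p powr b"
          using powr_mono[OF b(3) x1] by linarith
        define m where "m = nat \<lfloor>real p powr b\<rfloor> + 1"
        have fl0: "\<lfloor>real p powr b\<rfloor> \<ge> 0" by simp
        have rm: "real (m - 1) = of_int \<lfloor>real p powr b\<rfloor>" unfolding m_def using fl0 by simp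
        have "real (nat \<lfloor>real p powr b\<rfloor>) \<le> real p powr b" using fl0 by simp
        then have "nat \<lfloor>real p powr b\<rfloor> < card S" using big by linarith
        then have mS: "m \<le> card Sn" unfolding m_def cSn by simp
        obtain N where N: "N \<subseteq> Sn" "card N = m" "finite N" using obtain_subset_with_card_n[OF mS] by blast
        have Nsub: "N \<subseteq> {0..<p}" using N(1) Snsub by auto
        have Ncl: "chi p (int a - int c) = 1" if "a \<in> N" "c \<in> N" "a \<noteq> c" for a c
          using Scl[of "int a" "int c"] that N(1) unfolding Sn_def by auto
        define x where "x = (\<lambda>j::nat. if j \<in> N then (1::real) else 0)"
        have supp: "{j \<in> {0..<p + 1}. x j \<noteq> 0} = N" unfolding x_def using Nsub by auto
        have mle: "real m \<le> real p powr \<gamma>"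
        proof -
          have "real m \<le> real p powr b + 1" unfolding m_def using fl0 by simp
          also have "\<dots> \<le> real p powr \<gamma>" using Pa pPa by blast
          finally show ?thesis .
        qed
        define \<delta> where "\<delta> = real p powr (\<tau> - 1/2 + e2)"
        have rip: "RIP (paley_matrix p) ((p + 1) div 2) (p + 1) (real p powr \<gamma>) \<delta>"
          using P1 pr pP1 unfolding \<delta>_def by blast
        define Sig where "Sig = (\<Sum>i<(p+1) div 2. (cmod (\<Sum>j<p+1. paley_matrix p i j * complex_of_real (x j)))\<^sup>2)"
        have nx: "(\<Sum>j<p+1. (x j)\<^sup>2) = real m"
        proof -
          have "(\<Sum>j<p+1. (x j)\<^sup>2) = (\<Sum>j<p+1. if j \<in> N then 1 else 0)"
            unfolding x_def by (intro sum.cong) auto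
          also have "\<dots> = (\<Sum>j\<in>N. 1)" using Nsub by (intro sum_ind) auto
          finally show ?thesis using N(2) by simp
        qed
        have xp: "x p = 0" unfolding x_def using Nsub by auto
        have bounds: "(1 - \<delta>) * real m \<le> Sig" "Sig \<le> (1 + \<delta>) * real m"
          using rip[unfolded RIP_def, rule_format, of x] supp N(2) mle nx unfolding Sig_def by auto
        have Qv: "Qf p x = real m * (real m - 1)"
          unfolding x_def using clique_Q[OF pr(1) Nsub Ncl] N(2) by simp
        have "complex_of_real (Sig - real m) = gam p / of_nat p * of_real (real m * (real m - 1))"
          using key[OF pr(1) p2, of x] unfolding Sig_def[symmetric] nx xp Qv by simp
        then have "\<bar>Sig - real m\<bar> = cmod (gam p) / real p * \<bar>real m * (real m - 1)\<bar>"
          by (metis norm_divide norm_mult norm_of_nat norm_of_real)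
        also have "\<dots> = real m * (real m - 1) / sqrt (real p)"
        proof -
          have "m \<ge> 1" unfolding m_def by simp
          then have "\<bar>real m * (real m - 1)\<bar> = real m * (real m - 1)" by simp
          then show ?thesis using gam_norm[OF pr(1) p2] x1 by (simp add: real_div_sqrt field_simps)
        qed
        finally have eqD: "\<bar>Sig - real m\<bar> = real m * (real m - 1) / sqrt (real p)" .
        have "\<bar>Sig - real m\<bar> \<le> \<delta> * real m" using bounds by (simp add: abs_le_iff algebra_simps)
        then have "real m * (real m - 1) / sqrt (real p) \<le> \<delta> * real m" using eqD by simp
        then have "real m * (real m - 1) \<le> \<delta> * real m * sqrt (real p)" using x1 by (simp add: divide_le_eq)
        then have "real m - 1 \<le> \<delta> * sqrt (real p)"
        proof -
          assume a: "real m * (real m - 1) \<le> \<delta> * real m * sqrt (real p)"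
          have "m \<ge> 1" unfolding m_def by simp
          then have "real m > 0" by simp
          then show ?thesis using a by (simp add: mult.assoc mult_le_cancel_left_pos)
        qed
        also have "\<delta> * sqrt (real p) = real p powr (\<tau> + e2)"
        proof -
          have "real p powr (\<tau> - 1/2 + e2) * real p powr (1/2) = real p powr ((\<tau> - 1/2 + e2) + 1/2)"
            by (rule powr_add[symmetric])
          also have "(\<tau> - 1/2 + e2) + 1/2 = \<tau> + e2" by simp
          finally have "real p powr (\<tau> - 1/2 + e2) * real p powr (1/2) = real p powr (\<tau> + e2)" .
          then show ?thesis unfolding \<delta>_def using x1 by (simp add: powr_half_sqrt)
        qed
        finally have A1: "real m - 1 \<le> real p powr (\<tau> + e2)" .
        have "real m - 1 = of_int \<lfloor>real p powr b\<rfloor>" using rm \<open>real (m - 1) = _\<close> unfolding m_def by simp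
        also have "of_int \<lfloor>real p powr b\<rfloor> > real p powr b - 1" by linarith
        then have "real m - 1 > real p powr b - 1" using \<open>real m - 1 = _\<close> by simp
        moreover have "real p powr (\<tau> + e2) + 1 \<le> real p powr b" using Pb pPb by blast
        ultimately show False using A1 by linarith
      qed
    qed
  qed
  show ?thesis using t' cl by blast
qed


theorem mainTheorem1:
  shows "((\<exists>\<alpha> \<beta>. 0 < \<alpha> \<and> \<alpha> < 1/2 \<and> 0 < \<beta> \<and> \<beta> < 2 \<and> PaleyDiscrepancy \<alpha> \<beta>)
            \<longrightarrow> (\<exists>\<gamma> \<tau>. \<gamma> > 1/2 \<and> \<tau> < 1/2 \<and> (\<forall>\<epsilon>>0. PaleyRIP \<gamma> (\<tau> - 1/2 + \<epsilon>))))
       \<and> ((\<exists>\<gamma> \<tau>. \<gamma> > 1/2 \<and> \<tau> < 1/2 \<and> (\<forall>\<epsilon>>0. PaleyRIP \<gamma> (\<tau> - 1/2 + \<epsilon>)))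
            \<longrightarrow> (\<exists>\<tau>. \<tau> < 1/2 \<and> (\<forall>\<epsilon>>0. PaleyClique (\<tau> + \<epsilon>))))"
  using part1 part2 by blast

end
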